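(* Let $n\ge 2$, $\gamma\in\{0,1\}$, $0<\alpha<1$. Let $C_{i,k}>0$ ($0\le i\le n$, $0\le k\le n$, $i+k\le n$) be fixed positive numbers (weights). Let $f_1,\dots,f_{n-1}>0$ and $\sigma_1,\dots,\sigma_{n-1}>0$ be arbitrary (unknown) parameters, and put $f_n=1$, $\sigma_n=0$. Randomness: let $\boldsymbol{\zeta}_{i,k}$ ($0\le i\le n-k$, $1\le k\le n-1$) and $\boldsymbol{\zeta}_{i,n-i+1}$ ($1\le i\le n$) be i.i.d. standard normal random variables; write $\boldsymbol{\mathcal R}=\{\boldsymbol\zeta_{i,k}: 0\le i\le n-k,\ 1\le k\le n-1\}$ (the residues of the observed triangle). Define the observed factors $\boldsymbol F_{i,k}=f_k+\sigma_k C_{i,k-1}^{-\gamma/2}\boldsymbol\zeta_{i,k}$ and the estimates, for $k=1,\dots,n-1$, $$\hat{\boldsymbol f}_k=\frac{\sum_{i=0}^{n-k}C_{i,k-1}^\gamma \boldsymbol F_{i,k}}{\sum_{i=0}^{n-k}C_{i,k-1}^\gamma},\qquad \hat{\boldsymbol\sigma}_k^2=\frac{1}{n-k}\sum_{i=0}^{n-k}C_{i,k-1}^\gamma(\boldsymbol F_{i,k}-\hat{\boldsymbol f}_k)^2,$$ and $\hat f_n=1$, $\hat\sigma_n=0$. The true next-year payments are $\boldsymbol Z_{i,n-i+1}=\bigl(f_{n-i+1}+\sigma_{n-i+1}C_{i,n-i}^{-\gamma/2}\boldsymbol\zeta_{i,n-i+1}-1\bigr)C_{i,n-i}$ for $1\le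 i\le n$. Modelled quantities: for a fixed realization $\mathcal R$ of $\boldsymbol{\mathcal R}$ (hence fixed $\hat f_k,\hat\sigma_k$), let $\boldsymbol\zeta'_{i,k}$ ($0\le i\le n-k$, $1\le k\le n-1$) and $\boldsymbol\zeta'_{i,n-i+1}$ ($1\le i\le n$) be i.i.d. standard normal, independent of everything above. For $k=1,\dots,n-1$ set $$\boldsymbol R'_k=\sum_{i=0}^{n-k}\boldsymbol\zeta'_{i,k}\frac{\sqrt{C_{i,k-1}^\gamma}}{\sum_{h=0}^{n-k}C_{h,k-1}^\gamma},\qquad \boldsymbol M'_k=\frac{1}{n-k}\sum_{i=0}^{n-k}C_{i,k-1}^\gamma\Bigl(\frac{\boldsymbol\zeta'_{i,k}}{\sqrt{C_{i,k-1}^\gamma}}-\boldsymbol R'_k\Bigr)^2,$$ $(\boldsymbol\sigma_k^{sim})^2=\hat\sigma_k^2/\boldsymbol M'_k$, $\boldsymbol f_k^{sim}=\hat f_k-\boldsymbol\sigma_k^{sim}\boldsymbol R'_k$, and $\boldsymbol f_n^{sim}=1$, $\boldsymbol\sigma_n^{sim}=0$. For $1\le i\le n$ let $\boldsymbol Z^{model}_{i,n-i+1}=\bigl(\boldsymbol f^{sim}_{n-i+1}+\boldsymbol\sigma^{sim}_{n-i+1}C_{i,n-i}^{-\gamma/2}\boldsymbol\zeta'_{i,n-i+1}-1\bigr)C_{i,n-i}$ and $\hat Z_{i,n-i+1}=(\hat f_{n-i+1}-1)C_{i,n-i}$. With $v_{i}=C_{i,n-i}^2\bigl(C_{i,n-i}^{-\gamma}+(\sum_{l=0}^{i-1}C_{l,n-i}^\gamma)^{-1}\bigr)$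 define for $2\le i\le n$ $$w_{n-i+1}=\frac{\sigma_{n-i+1}^2v_i}{\sum_{j=2}^n\sigma_{n-j+1}^2v_j},\qquad \hat w_{n-i+1}=\frac{\hat\sigma_{n-i+1}^2v_i}{\sum_{j=2}^n\hat\sigma_{n-j+1}^2v_j},$$ $$\boldsymbol a_{sim}=\Bigl(\sum_{i=2}^n\frac{\hat w_{n-i+1}}{\boldsymbol M'_{n-i+1}}\cdot\sum_{i=2}^n w_{n-i+1}\boldsymbol M'_{n-i+1}\Bigr)^{-1/2},$$ and $\boldsymbol Z^{model}_{adj}(\mathcal R)=\sum_{i=1}^n\bigl[(1-\boldsymbol a_{sim})\hat Z_{i,n-i+1}+\boldsymbol a_{sim}\boldsymbol Z^{model}_{i,n-i+1}\bigr]$. Let $\mathrm{SCR}_{\boldsymbol Z}(\alpha;\mathcal R)$ denote the $\alpha$-quantile of the distribution of $\boldsymbol Z^{model}_{adj}(\mathcal R)$ (for fixed $\mathcal R$). Then, regardless of the values of the parameters $f_k,\sigma_k$, $$P\Bigl(\sum_{i=1}^n\boldsymbol Z_{i,n-i+1}\le \mathrm{SCR}_{\boldsymbol Z}(\alpha;\boldsymbol{\mathcal R})\Bigr)=\alpha,$$ where the probability is taken over $\boldsymbol{\mathcal R}$ and the $\boldsymbol\zeta_{i,n-i+1}$.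
   Context: This is the normal chain-ladder model for a claims development triangle: $C_{i,k}$ are cumulative claims of accident year $i$ up to development year $k$, observed for $i+k\le n$; all claims are settled after $n$ development years ($f_n=1$, $\sigma_n=0$, so $\boldsymbol Z_{1,n}=0$). The weights $C_{i,k}$ are treated as fixed, only the residues are random. The variable $\sum_i\boldsymbol Z_{i,n-i+1}$ is the true payment of the next calendar year, and $\boldsymbol Z^{model}_{adj}$ is the payment modelled by an adjusted fiducial ("inversion") method with stochastic correction factor $\boldsymbol a_{sim}$. *)

theory Defs
  imports "HOL-Probability.Probability"
begin

definition std_normal_measure :: "real measure" where
  "std_normal_measure = density lborel std_normal_density"

text \<open>Index set of all residues: the observed triangle
  (0 \<le> i \<le> n-k, 1 \<le> k \<le> n-1) and the next calendar diagonal (i, n-i+1), 1 \<le> i \<le> n.\<close>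
definition idx :: "nat \<Rightarrow> (nat \<times> nat) set" where
  "idx n = {(i,k). 1 \<le> k \<and> k \<le> n - 1 \<and> i \<le> n - k} \<union> {(i,k). 1 \<le> i \<and> i \<le> n \<and> k = n - i + 1}"

definition resid_space :: "nat \<Rightarrow> (nat \<times> nat \<Rightarrow> real) measure" where
  "resid_space n = (\<Pi>\<^sub>M ik\<in>idx n. std_normal_measure)"

definition quantile :: "'a measure \<Rightarrow> ('a \<Rightarrow> real) \<Rightarrow> real \<Rightarrow> real" where
  "quantile M X a = Inf {x. a \<le> measure M {\<omega> \<in> space M. X \<omega> \<le> x}}"

definition Fobs :: "(nat \<Rightarrow> nat \<Rightarrow> real) \<Rightarrow> real \<Rightarrow> (nat \<Rightarrow> real) \<Rightarrow> (nat \<Rightarrow> real)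
    \<Rightarrow> (nat \<times> nat \<Rightarrow> real) \<Rightarrow> nat \<Rightarrow> nat \<Rightarrow> real" where
  "Fobs C \<gamma> f \<sigma> \<zeta> i k = f k + \<sigma> k * C i (k - 1) powr (- \<gamma> / 2) * \<zeta> (i, k)"

definition fhat :: "nat \<Rightarrow> (nat \<Rightarrow> nat \<Rightarrow> real) \<Rightarrow> real \<Rightarrow> (nat \<Rightarrow> real) \<Rightarrow> (nat \<Rightarrow> real)
    \<Rightarrow> (nat \<times> nat \<Rightarrow> real) \<Rightarrow> nat \<Rightarrow> real" where
  "fhat n C \<gamma> f \<sigma> \<zeta> k = (if k = n then 1 else
     (\<Sum>i=0..n-k. C i (k - 1) powr \<gamma> * Fobs C \<gamma> f \<sigma> \<zeta> i k) / (\<Sum>i=0..n-k. C i (k - 1) powr \<gamma>))"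

definition sighat :: "nat \<Rightarrow> (nat \<Rightarrow> nat \<Rightarrow> real) \<Rightarrow> real \<Rightarrow> (nat \<Rightarrow> real) \<Rightarrow> (nat \<Rightarrow> real)
    \<Rightarrow> (nat \<times> nat \<Rightarrow> real) \<Rightarrow> nat \<Rightarrow> real" where
  "sighat n C \<gamma> f \<sigma> \<zeta> k = (if k = n then 0 else
     sqrt (1 / real (n - k) * (\<Sum>i=0..n-k. C i (k - 1) powr \<gamma> *
        (Fobs C \<gamma> f \<sigma> \<zeta> i k - fhat n C \<gamma> f \<sigma> \<zeta> k)\<^sup>2)))"

definition Ztrue :: "nat \<Rightarrow> (nat \<Rightarrow> nat \<Rightarrow> real) \<Rightarrow> real \<Rightarrow> (nat \<Rightarrow> real) \<Rightarrow> (nat \<Rightarrow> real)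
    \<Rightarrow> (nat \<times> nat \<Rightarrow> real) \<Rightarrow> nat \<Rightarrow> real" where
  "Ztrue n C \<gamma> f \<sigma> \<zeta> i = (f (n - i + 1) + \<sigma> (n - i + 1) * C i (n - i) powr (- \<gamma> / 2)
      * \<zeta> (i, n - i + 1) - 1) * C i (n - i)"

definition Rp :: "nat \<Rightarrow> (nat \<Rightarrow> nat \<Rightarrow> real) \<Rightarrow> real \<Rightarrow> (nat \<times> nat \<Rightarrow> real) \<Rightarrow> nat \<Rightarrow> real" where
  "Rp n C \<gamma> \<zeta>' k = (\<Sum>i=0..n-k. \<zeta>' (i, k) * sqrt (C i (k - 1) powr \<gamma>)
      / (\<Sum>h=0..n-k. C h (k - 1) powr \<gamma>))"

definition Mp :: "nat \<Rightarrow> (nat \<Rightarrow> nat \<Rightarrow> real) \<Rightarrow> real \<Rightarrow> (nat \<times> nat \<Rightarrow> real) \<Rightarrow> nat \<Rightarrow> real" where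
  "Mp n C \<gamma> \<zeta>' k = 1 / real (n - k) * (\<Sum>i=0..n-k. C i (k - 1) powr \<gamma> *
      (\<zeta>' (i, k) / sqrt (C i (k - 1) powr \<gamma>) - Rp n C \<gamma> \<zeta>' k)\<^sup>2)"

definition sigsim :: "nat \<Rightarrow> (nat \<Rightarrow> nat \<Rightarrow> real) \<Rightarrow> real \<Rightarrow> (nat \<Rightarrow> real) \<Rightarrow> (nat \<Rightarrow> real)
    \<Rightarrow> (nat \<times> nat \<Rightarrow> real) \<Rightarrow> (nat \<times> nat \<Rightarrow> real) \<Rightarrow> nat \<Rightarrow> real" where
  "sigsim n C \<gamma> f \<sigma> \<zeta> \<zeta>' k = (if k = n then 0 else
      sqrt ((sighat n C \<gamma> f \<sigma> \<zeta> k)\<^sup>2 / Mp n C \<gamma> \<zeta>' k))"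

definition fsim :: "nat \<Rightarrow> (nat \<Rightarrow> nat \<Rightarrow> real) \<Rightarrow> real \<Rightarrow> (nat \<Rightarrow> real) \<Rightarrow> (nat \<Rightarrow> real)
    \<Rightarrow> (nat \<times> nat \<Rightarrow> real) \<Rightarrow> (nat \<times> nat \<Rightarrow> real) \<Rightarrow> nat \<Rightarrow> real" where
  "fsim n C \<gamma> f \<sigma> \<zeta> \<zeta>' k = (if k = n then 1 else
      fhat n C \<gamma> f \<sigma> \<zeta> k - sigsim n C \<gamma> f \<sigma> \<zeta> \<zeta>' k * Rp n C \<gamma> \<zeta>' k)"

definition Zmodel :: "nat \<Rightarrow> (nat \<Rightarrow> nat \<Rightarrow> real) \<Rightarrow> real \<Rightarrow> (nat \<Rightarrow> real) \<Rightarrow> (nat \<Rightarrow> real)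
    \<Rightarrow> (nat \<times> nat \<Rightarrow> real) \<Rightarrow> (nat \<times> nat \<Rightarrow> real) \<Rightarrow> nat \<Rightarrow> real" where
  "Zmodel n C \<gamma> f \<sigma> \<zeta> \<zeta>' i = (fsim n C \<gamma> f \<sigma> \<zeta> \<zeta>' (n - i + 1)
      + sigsim n C \<gamma> f \<sigma> \<zeta> \<zeta>' (n - i + 1) * C i (n - i) powr (- \<gamma> / 2) * \<zeta>' (i, n - i + 1) - 1)
      * C i (n - i)"

definition Zhat :: "nat \<Rightarrow> (nat \<Rightarrow> nat \<Rightarrow> real) \<Rightarrow> real \<Rightarrow> (nat \<Rightarrow> real) \<Rightarrow> (nat \<Rightarrow> real)
    \<Rightarrow> (nat \<times> nat \<Rightarrow> real) \<Rightarrow> nat \<Rightarrow> real" where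
  "Zhat n C \<gamma> f \<sigma> \<zeta> i = (fhat n C \<gamma> f \<sigma> \<zeta> (n - i + 1) - 1) * C i (n - i)"

definition vv :: "nat \<Rightarrow> (nat \<Rightarrow> nat \<Rightarrow> real) \<Rightarrow> real \<Rightarrow> nat \<Rightarrow> real" where
  "vv n C \<gamma> i = (C i (n - i))\<^sup>2 * (C i (n - i) powr (- \<gamma>)
      + 1 / (\<Sum>l=0..i-1. C l (n - i) powr \<gamma>))"

text \<open>Weights w_{n-i+1} (indexed here by i), for a given volatility function s.\<close>
definition ww :: "nat \<Rightarrow> (nat \<Rightarrow> nat \<Rightarrow> real) \<Rightarrow> real \<Rightarrow> (nat \<Rightarrow> real) \<Rightarrow> nat \<Rightarrow> real" where
  "ww n C \<gamma> s i = (s (n - i + 1))\<^sup>2 * vv n C \<gamma> i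
      / (\<Sum>j=2..n. (s (n - j + 1))\<^sup>2 * vv n C \<gamma> j)"

definition asim :: "nat \<Rightarrow> (nat \<Rightarrow> nat \<Rightarrow> real) \<Rightarrow> real \<Rightarrow> (nat \<Rightarrow> real) \<Rightarrow> (nat \<Rightarrow> real)
    \<Rightarrow> (nat \<times> nat \<Rightarrow> real) \<Rightarrow> (nat \<times> nat \<Rightarrow> real) \<Rightarrow> real" where
  "asim n C \<gamma> f \<sigma> \<zeta> \<zeta>' =
     ((\<Sum>i=2..n. ww n C \<gamma> (sighat n C \<gamma> f \<sigma> \<zeta>) i / Mp n C \<gamma> \<zeta>' (n - i + 1))
      * (\<Sum>i=2..n. ww n C \<gamma> \<sigma> i * Mp n C \<gamma> \<zeta>' (n - i + 1))) powr (- 1 / 2)"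

definition Zadj :: "nat \<Rightarrow> (nat \<Rightarrow> nat \<Rightarrow> real) \<Rightarrow> real \<Rightarrow> (nat \<Rightarrow> real) \<Rightarrow> (nat \<Rightarrow> real)
    \<Rightarrow> (nat \<times> nat \<Rightarrow> real) \<Rightarrow> (nat \<times> nat \<Rightarrow> real) \<Rightarrow> real" where
  "Zadj n C \<gamma> f \<sigma> \<zeta> \<zeta>' = (\<Sum>i=1..n.
      (1 - asim n C \<gamma> f \<sigma> \<zeta> \<zeta>') * Zhat n C \<gamma> f \<sigma> \<zeta> i
      + asim n C \<gamma> f \<sigma> \<zeta> \<zeta>' * Zmodel n C \<gamma> f \<sigma> \<zeta> \<zeta>' i)"

text \<open>SCR_Z(alpha; R): alpha-quantile of Zadj(R) over the fresh residues zeta'.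
  It depends on zeta only through the observed residues R.\<close>
definition SCR :: "nat \<Rightarrow> (nat \<Rightarrow> nat \<Rightarrow> real) \<Rightarrow> real \<Rightarrow> (nat \<Rightarrow> real) \<Rightarrow> (nat \<Rightarrow> real)
    \<Rightarrow> real \<Rightarrow> (nat \<times> nat \<Rightarrow> real) \<Rightarrow> real" where
  "SCR n C \<gamma> f \<sigma> \<alpha> \<zeta> = quantile (resid_space n) (\<lambda>\<zeta>'. Zadj n C \<gamma> f \<sigma> \<zeta> \<zeta>') \<alpha>"

end

theory Submission
  imports Defs
begin

lemma sn_def': "std_normal_measure = density lborel (\<lambda>x. ennreal (std_normal_density x))"
  by (simp add: std_normal_measure_def)

lemma prob_sn: "prob_space std_normal_measure"
  unfolding sn_def' by (rule prob_space_normal_density) simp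

lemma sf_sn[simp]: "sigma_finite_measure std_normal_measure"
  using prob_sn prob_space_imp_sigma_finite by blast

lemma sn_nn_meas:
  "case_prod f \<in> borel_measurable (N \<Otimes>\<^sub>M std_normal_measure) \<Longrightarrow> (\<lambda>x. \<integral>\<^sup>+ y. f x y \<partial>std_normal_measure) \<in> borel_measurable N"
  by (rule sigma_finite_measure.borel_measurable_nn_integral[OF sf_sn])

lemma sets_sn[simp, measurable_cong]: "sets std_normal_measure = sets borel"
  by (simp add: sn_def')
lemma space_sn[simp]: "space std_normal_measure = UNIV"
  by (simp add: sn_def')

lemma nn_sn: "g \<in> borel_measurable borel \<Longrightarrow>
   (\<integral>\<^sup>+x. g x \<partial>std_normal_measure) = (\<integral>\<^sup>+x. ennreal (std_normal_density x) * g x \<partial>lborel)"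
  unfolding sn_def' by (simp add: nn_integral_density)


lemma lborel_rot2:
  fixes s t :: real and K :: "real \<Rightarrow> real \<Rightarrow> ennreal"
  assumes s: "s \<noteq> 0" and st: "s\<^sup>2 + t\<^sup>2 = 1"
    and K[measurable]: "case_prod K \<in> borel_measurable (borel \<Otimes>\<^sub>M borel)"
  shows "(\<integral>\<^sup>+y. \<integral>\<^sup>+z. K (s*z+t*y) (t*z-s*y) \<partial>lborel \<partial>lborel)
       = (\<integral>\<^sup>+y. \<integral>\<^sup>+z. K z y \<partial>lborel \<partial>lborel)"
proof -
  have Km: "K w \<in> borel_measurable borel" for w by measurable
  have Km2: "(\<lambda>z. K z y) \<in> borel_measurable borel" for y by measurable
  have inner: "(\<integral>\<^sup>+w. K w ((t*w-y)/s) \<partial>lborel) = ennreal \<bar>s\<bar> * (\<integral>\<^sup>+z. K (s*z+t*y) (t*z-s*y) \<partial>lborel)" for y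
  proof -
    have "(\<integral>\<^sup>+w. K w ((t*w-y)/s) \<partial>lborel) = ennreal \<bar>s\<bar> * (\<integral>\<^sup>+z. K (t*y + s*z) ((t*(t*y + s*z)-y)/s) \<partial>lborel)"
      by (rule nn_integral_real_affine[OF _ s]) measurable
    also have "(\<lambda>z. K (t*y + s*z) ((t*(t*y + s*z)-y)/s)) = (\<lambda>z. K (s*z+t*y) (t*z-s*y))"
    proof
      fix z
      have "s*(s*y)+t*(t*y) = y" using st by (metis distrib_right mult.assoc mult_1 power2_eq_square)
      then have "t*(t*y + s*z)-y = s * (t*z-s*y)" by (simp add: algebra_simps)
      then show "K (t*y + s*z) ((t*(t*y + s*z)-y)/s) = K (s*z+t*y) (t*z-s*y)"
        using s by (simp add: add.commute)
    qed
    finally show ?thesis .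
  qed
  have inner2: "(\<integral>\<^sup>+y. K w ((t*w-y)/s) \<partial>lborel) = ennreal \<bar>s\<bar> * (\<integral>\<^sup>+v. K w v \<partial>lborel)" for w
  proof -
    have "(\<integral>\<^sup>+v. K w v \<partial>lborel) = ennreal \<bar>-1/s\<bar> * (\<integral>\<^sup>+y. K w (t*w/s + (-1/s)*y) \<partial>lborel)"
      by (rule nn_integral_real_affine) (use s in auto)
    also have "(\<lambda>y. K w (t*w/s + (-1/s)*y)) = (\<lambda>y. K w ((t*w-y)/s))"
      by (simp add: diff_divide_distrib)
    finally have "ennreal \<bar>s\<bar> * (\<integral>\<^sup>+v. K w v \<partial>lborel) = ennreal \<bar>s\<bar> * ennreal \<bar>-1/s\<bar> * (\<integral>\<^sup>+y. K w ((t*w-y)/s) \<partial>lborel)"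
      by (simp add: mult.assoc)
    also have "ennreal \<bar>s\<bar> * ennreal \<bar>-1/s\<bar> = 1"
      using s by (simp add: ennreal_mult'[symmetric] abs_mult[symmetric])
    finally show ?thesis by simp
  qed
  have "ennreal \<bar>s\<bar> * (\<integral>\<^sup>+y. \<integral>\<^sup>+z. K (s*z+t*y) (t*z-s*y) \<partial>lborel \<partial>lborel)
      = (\<integral>\<^sup>+y. ennreal \<bar>s\<bar> * \<integral>\<^sup>+z. K (s*z+t*y) (t*z-s*y) \<partial>lborel \<partial>lborel)"
    by (rule nn_integral_cmult[symmetric]) measurable
  also have "\<dots> = (\<integral>\<^sup>+y. \<integral>\<^sup>+w. K w ((t*w-y)/s) \<partial>lborel \<partial>lborel)"
    by (simp add: inner)
  also have "\<dots> = (\<integral>\<^sup>+w. \<integral>\<^sup>+y. K w ((t*w-y)/s) \<partial>lborel \<partial>lborel)"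
    by (rule lborel_pair.Fubini') measurable
  also have "\<dots> = (\<integral>\<^sup>+w. ennreal \<bar>s\<bar> * \<integral>\<^sup>+v. K w v \<partial>lborel \<partial>lborel)"
    by (simp add: inner2)
  also have "\<dots> = ennreal \<bar>s\<bar> * (\<integral>\<^sup>+w. \<integral>\<^sup>+v. K w v \<partial>lborel \<partial>lborel)"
    by (rule nn_integral_cmult) measurable
  also have "(\<integral>\<^sup>+w. \<integral>\<^sup>+v. K w v \<partial>lborel \<partial>lborel) = (\<integral>\<^sup>+y. \<integral>\<^sup>+z. K z y \<partial>lborel \<partial>lborel)"
    by (rule lborel_pair.Fubini'[symmetric]) measurable
  finally show ?thesis
    using s by (simp add: ennreal_mult_cancel_left)
qed


abbreviation "\<mu>N \<equiv> std_normal_measure"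

lemma sn_rot2:
  fixes s t :: real and h :: "real \<Rightarrow> real \<Rightarrow> ennreal"
  assumes s: "s \<noteq> 0" and st: "s\<^sup>2 + t\<^sup>2 = 1"
    and h[measurable]: "case_prod h \<in> borel_measurable (borel \<Otimes>\<^sub>M borel)"
  shows "(\<integral>\<^sup>+y. \<integral>\<^sup>+z. h (s*z+t*y) (t*z-s*y) \<partial>\<mu>N \<partial>\<mu>N) = (\<integral>\<^sup>+y. \<integral>\<^sup>+z. h z y \<partial>\<mu>N \<partial>\<mu>N)"
proof -
  define K where "K a b = ennreal (std_normal_density a) * ennreal (std_normal_density b) * h a b" for a b
  have Km[measurable]: "case_prod K \<in> borel_measurable (borel \<Otimes>\<^sub>M borel)"
    unfolding K_def by measurable
  have phi: "ennreal (std_normal_density y) * ennreal (std_normal_density z)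
      = ennreal (std_normal_density (s*z+t*y)) * ennreal (std_normal_density (t*z-s*y))" for y z
  proof -
    have sq: "(s*z+t*y)\<^sup>2 + (t*z-s*y)\<^sup>2 = z\<^sup>2 + y\<^sup>2"
    proof -
      have "(s*z+t*y)\<^sup>2 + (t*z-s*y)\<^sup>2 = (s\<^sup>2 + t\<^sup>2) * (z\<^sup>2 + y\<^sup>2)"
        by (simp add: algebra_simps power2_eq_square)
      then show ?thesis using st by simp
    qed
    have "std_normal_density y * std_normal_density z
       = std_normal_density (s*z+t*y) * std_normal_density (t*z-s*y)"
      unfolding std_normal_density_def
      using sq by (simp add: exp_add[symmetric] field_simps)
    then show ?thesis by (simp add: ennreal_mult'[symmetric])
  qed
  have L: "(\<integral>\<^sup>+y. \<integral>\<^sup>+z. h (s*z+t*y) (t*z-s*y) \<partial>\<mu>N \<partial>\<mu>N)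
      = (\<integral>\<^sup>+y. \<integral>\<^sup>+z. K (s*z+t*y) (t*z-s*y) \<partial>lborel \<partial>lborel)"
    apply (subst nn_sn)
     apply (rule sn_nn_meas, measurable)
    apply (rule nn_integral_cong)
    apply (subst nn_sn, measurable)
    apply (subst nn_integral_cmult[symmetric], measurable)
    apply (rule nn_integral_cong)
    apply (simp only: K_def mult.assoc[symmetric])
    apply (subst phi, rule refl)
    done
  have R: "(\<integral>\<^sup>+y. \<integral>\<^sup>+z. h z y \<partial>\<mu>N \<partial>\<mu>N) = (\<integral>\<^sup>+y. \<integral>\<^sup>+z. K z y \<partial>lborel \<partial>lborel)"
    apply (subst nn_sn)
     apply (rule sn_nn_meas, measurable)
    apply (rule nn_integral_cong)
    apply (subst nn_sn, measurable)
    apply (subst nn_integral_cmult[symmetric], measurable)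
    apply (rule nn_integral_cong)
    apply (simp add: K_def mult_ac)
    done
  show ?thesis unfolding L R by (rule lborel_rot2[OF s st Km])
qed

lemma sn_flip:
  assumes [measurable]: "g \<in> borel_measurable borel"
  shows "(\<integral>\<^sup>+x. g (- x) \<partial>\<mu>N) = (\<integral>\<^sup>+x. g x \<partial>\<mu>N)"
proof -
  have "(\<integral>\<^sup>+x. ennreal (std_normal_density x) * g x \<partial>lborel)
     = ennreal \<bar>-1\<bar> * (\<integral>\<^sup>+x. ennreal (std_normal_density (0 + -1 * x)) * g (0 + -1*x) \<partial>lborel)"
    by (rule nn_integral_real_affine) auto
  then show ?thesis
    by (simp add: nn_sn std_normal_density_def)
qed


abbreviation PN :: "'i set \<Rightarrow> ('i \<Rightarrow> real) measure" where "PN I \<equiv> PiM I (\<lambda>_. \<mu>N)"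

interpretation snp: product_sigma_finite "\<lambda>_. \<mu>N"
  unfolding product_sigma_finite_def by simp

lemma upd2_meas:
  assumes x: "x \<in> space (PN I')" and jl: "insert j (insert l I') = I"
  shows "(\<lambda>(a,b). x(l:=b, j:=a)) \<in> (borel \<Otimes>\<^sub>M borel) \<rightarrow>\<^sub>M PN I"
proof (rule measurable_PiM_single')
  show "(\<lambda>(a,b). x(l:=b, j:=a)) \<in> space (borel \<Otimes>\<^sub>M borel) \<rightarrow> (I \<rightarrow>\<^sub>E space \<mu>N)"
    using x jl by (auto simp: space_PiM PiE_def extensional_def)
next
  fix i assume "i \<in> I"
  show "(\<lambda>w. (case w of (a, b) \<Rightarrow> x(l := b, j := a)) i) \<in> borel \<Otimes>\<^sub>M borel \<rightarrow>\<^sub>M \<mu>N"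
    by (cases "i = j"; cases "i = l") (auto simp: case_prod_beta)
qed

lemma upd_meas:
  assumes "j \<notin> J"
  shows "(\<lambda>(x,z). x(j:=z)) \<in> (PN J \<Otimes>\<^sub>M \<mu>N) \<rightarrow>\<^sub>M PN (insert j J)"
proof (rule measurable_PiM_single')
  show "(\<lambda>(x,z). x(j:=z)) \<in> space (PN J \<Otimes>\<^sub>M \<mu>N) \<rightarrow> (insert j J \<rightarrow>\<^sub>E space \<mu>N)"
    by (auto simp: space_PiM PiE_def extensional_def space_pair_measure)
next
  fix i assume i: "i \<in> insert j J"
  show "(\<lambda>w. (case w of (x, z) \<Rightarrow> x(j := z)) i) \<in> PN J \<Otimes>\<^sub>M \<mu>N \<rightarrow>\<^sub>M \<mu>N"
  proof (cases "i = j")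
    case True then show ?thesis by (simp add: case_prod_beta)
  next
    case False then have "i \<in> J" using i by auto
    with False show ?thesis by (simp add: case_prod_beta)
  qed
qed

lemma PN_insert2:
  assumes fin: "finite I'" and jl: "j \<notin> insert l I'" "l \<notin> I'"
    and f[measurable]: "f \<in> borel_measurable (PN (insert j (insert l I')))"
  shows "integral\<^sup>N (PN (insert j (insert l I'))) f = (\<integral>\<^sup>+x. \<integral>\<^sup>+y. \<integral>\<^sup>+z. f (x(l:=y, j:=z)) \<partial>\<mu>N \<partial>\<mu>N \<partial>PN I')"
proof -
  have Fm: "(\<lambda>x. \<integral>\<^sup>+z. f (x(j:=z)) \<partial>\<mu>N) \<in> borel_measurable (PN (insert l I'))"
    apply (rule sn_nn_meas)
    using measurable_comp[OF upd_meas[OF jl(1)] f] by (simp add: comp_def case_prod_beta')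
  have "integral\<^sup>N (PN (insert j (insert l I'))) f = (\<integral>\<^sup>+x. \<integral>\<^sup>+z. f (x(j:=z)) \<partial>\<mu>N \<partial>PN (insert l I'))"
    by (rule snp.product_nn_integral_insert) (use fin jl in auto)
  also have "\<dots> = (\<integral>\<^sup>+x. \<integral>\<^sup>+y. \<integral>\<^sup>+z. f (x(l:=y, j:=z)) \<partial>\<mu>N \<partial>\<mu>N \<partial>PN I')"
    by (rule snp.product_nn_integral_insert[OF fin jl(2) Fm])
  finally show ?thesis .
qed

lemma PiM_givens:
  assumes fin: "finite I" and jl: "j \<in> I" "l \<in> I" "j \<noteq> l" and s: "s \<noteq> 0" "s\<^sup>2 + t\<^sup>2 = 1"
   and g[measurable]: "g \<in> borel_measurable (PN I)"
  shows "(\<integral>\<^sup>+\<zeta>. g (\<zeta>(j := s*\<zeta> j + t*\<zeta> l, l := t*\<zeta> j - s*\<zeta> l)) \<partial>PN I) = integral\<^sup>N (PN I) g"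
proof -
  define I' where "I' = I - {j,l}"
  have I: "I = insert j (insert l I')" "j \<notin> insert l I'" "l \<notin> I'" "finite I'"
    using jl fin by (auto simp: I'_def)
  have gm: "f \<in> borel_measurable (PN (insert j (insert l I')))" if "f \<in> borel_measurable (PN I)" for f
    using that I(1) by simp
  have rho: "(\<lambda>\<zeta>. \<zeta>(j := s*\<zeta> j + t*\<zeta> l, l := t*\<zeta> j - s*\<zeta> l)) \<in> PN I \<rightarrow>\<^sub>M PN I"
  proof (rule measurable_PiM_single')
    show "(\<lambda>\<zeta>. \<zeta>(j := s*\<zeta> j + t*\<zeta> l, l := t*\<zeta> j - s*\<zeta> l)) \<in> space (PN I) \<rightarrow> (I \<rightarrow>\<^sub>E space \<mu>N)"
      using jl by (auto simp: space_PiM PiE_def extensional_def)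
  next
    fix i assume "i \<in> I"
    show "(\<lambda>w. (w(j := s*w j + t*w l, l := t*w j - s*w l)) i) \<in> PN I \<rightarrow>\<^sub>M \<mu>N"
      using \<open>i \<in> I\<close> jl by (cases "i = j"; cases "i = l") auto
  qed
  have gr: "(\<lambda>\<zeta>. g (\<zeta>(j := s*\<zeta> j + t*\<zeta> l, l := t*\<zeta> j - s*\<zeta> l))) \<in> borel_measurable (PN I)"
    using measurable_comp[OF rho g] by (simp add: comp_def)
  have key: "(\<integral>\<^sup>+y. \<integral>\<^sup>+z. g ((x(l:=y, j:=z))(j := s*z + t*y, l := t*z - s*y)) \<partial>\<mu>N \<partial>\<mu>N)
           = (\<integral>\<^sup>+y. \<integral>\<^sup>+z. g (x(l:=y, j:=z)) \<partial>\<mu>N \<partial>\<mu>N)" if x: "x \<in> space (PN I')" for x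
  proof -
    define h where "h a b = g (x(l:=b, j:=a))" for a b
    have hm: "case_prod h \<in> borel_measurable (borel \<Otimes>\<^sub>M borel)"
      unfolding h_def using measurable_comp[OF upd2_meas[OF x I(1)[symmetric]] g]
      by (simp add: comp_def case_prod_beta')
    have e: "(x(l:=y, j:=z))(j := s*z + t*y, l := t*z - s*y) = x(l:= t*z - s*y, j := s*z + t*y)" for y z
      using jl by (auto simp: fun_eq_iff)
    show ?thesis using sn_rot2[OF s hm] jl(3) by (simp add: h_def e fun_upd_twist)
  qed
  have "(\<integral>\<^sup>+\<zeta>. g (\<zeta>(j := s*\<zeta> j + t*\<zeta> l, l := t*\<zeta> j - s*\<zeta> l)) \<partial>PN I)
      = (\<integral>\<^sup>+x. \<integral>\<^sup>+y. \<integral>\<^sup>+z. g ((x(l:=y, j:=z))(j := s*z + t*y, l := t*z - s*y)) \<partial>\<mu>N \<partial>\<mu>N \<partial>PN I')"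
    apply (subst I(1))
    apply (subst PN_insert2[OF I(4) I(2) I(3) gm[OF gr]])
    apply (rule nn_integral_cong)+
    using jl(3) by (simp add: fun_upd_twist)
  also have "\<dots> = (\<integral>\<^sup>+x. \<integral>\<^sup>+y. \<integral>\<^sup>+z. g (x(l:=y, j:=z)) \<partial>\<mu>N \<partial>\<mu>N \<partial>PN I')"
    by (rule nn_integral_cong) (drule key, simp)
  also have "\<dots> = integral\<^sup>N (PN I) g"
    apply (subst I(1))
    apply (subst PN_insert2[OF I(4) I(2) I(3) gm[OF g]])
    ..
  finally show ?thesis .
qed


definition mpres :: "'i set \<Rightarrow> (('i \<Rightarrow> real) \<Rightarrow> ('i \<Rightarrow> real)) \<Rightarrow> bool" where
  "mpres I \<Psi> \<longleftrightarrow> \<Psi> \<in> PN I \<rightarrow>\<^sub>M PN I \<and>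
     (\<forall>g\<in>borel_measurable (PN I). (\<integral>\<^sup>+\<zeta>. g (\<Psi> \<zeta>) \<partial>PN I) = integral\<^sup>N (PN I) g)"

lemma mpres_id: "mpres I (\<lambda>x. x)"
  by (simp add: mpres_def)

lemma mpres_comp:
  assumes "mpres I \<Psi>1" "mpres I \<Psi>2" shows "mpres I (\<lambda>x. \<Psi>2 (\<Psi>1 x))"
proof -
  have m1: "\<Psi>1 \<in> PN I \<rightarrow>\<^sub>M PN I" and m2: "\<Psi>2 \<in> PN I \<rightarrow>\<^sub>M PN I"
    using assms by (auto simp: mpres_def)
  have "(\<integral>\<^sup>+\<zeta>. g (\<Psi>2 (\<Psi>1 \<zeta>)) \<partial>PN I) = integral\<^sup>N (PN I) g" if g: "g \<in> borel_measurable (PN I)" for g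
  proof -
    have "(\<lambda>x. g (\<Psi>2 x)) \<in> borel_measurable (PN I)"
      using measurable_comp[OF m2 g] by (simp add: comp_def)
    then have "(\<integral>\<^sup>+\<zeta>. g (\<Psi>2 (\<Psi>1 \<zeta>)) \<partial>PN I) = (\<integral>\<^sup>+\<zeta>. g (\<Psi>2 \<zeta>) \<partial>PN I)"
      using assms(1) by (auto simp: mpres_def)
    also have "\<dots> = integral\<^sup>N (PN I) g" using assms(2) g by (auto simp: mpres_def)
    finally show ?thesis .
  qed
  moreover have "(\<lambda>x. \<Psi>2 (\<Psi>1 x)) \<in> PN I \<rightarrow>\<^sub>M PN I"
    using measurable_comp[OF m1 m2] by (simp add: comp_def)
  ultimately show ?thesis by (simp add: mpres_def)
qed

lemma givens_meas:
  assumes jl: "j \<in> I" "l \<in> I"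
  shows "(\<lambda>\<zeta>. \<zeta>(j := s*\<zeta> j + t*\<zeta> l, l := t*\<zeta> j - s*\<zeta> l)) \<in> PN I \<rightarrow>\<^sub>M PN I"
proof (rule measurable_PiM_single')
  show "(\<lambda>\<zeta>. \<zeta>(j := s*\<zeta> j + t*\<zeta> l, l := t*\<zeta> j - s*\<zeta> l)) \<in> space (PN I) \<rightarrow> (I \<rightarrow>\<^sub>E space \<mu>N)"
    using jl by (auto simp: space_PiM PiE_def extensional_def)
next
  fix i assume "i \<in> I"
  show "(\<lambda>w. (w(j := s*w j + t*w l, l := t*w j - s*w l)) i) \<in> PN I \<rightarrow>\<^sub>M \<mu>N"
    using \<open>i \<in> I\<close> jl by (cases "i = j"; cases "i = l") auto
qed

lemma mpres_givens:
  assumes fin: "finite I" and jl: "j \<in> I" "l \<in> I" "j \<noteq> l" and s: "s \<noteq> 0" "s\<^sup>2 + t\<^sup>2 = 1"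
  shows "mpres I (\<lambda>\<zeta>. \<zeta>(j := s*\<zeta> j + t*\<zeta> l, l := t*\<zeta> j - s*\<zeta> l))"
  unfolding mpres_def using givens_meas[OF jl(1,2)] PiM_givens[OF fin jl s] by blast

lemma column_aux:
  fixes \<beta> :: "'i \<Rightarrow> real"
  assumes fin: "finite I" and j0: "j0 \<in> I" and b0: "\<beta> j0 \<noteq> 0"
  shows "finite F \<Longrightarrow> j0 \<notin> F \<Longrightarrow> F \<subseteq> I \<Longrightarrow> \<exists>\<Psi>. mpres I \<Psi> \<and>
     (\<forall>\<zeta> x. x \<notin> insert j0 F \<longrightarrow> \<Psi> \<zeta> x = \<zeta> x) \<and>
     (\<forall>\<zeta>. \<Psi> \<zeta> j0 = sgn (\<beta> j0) * (\<Sum>i\<in>insert j0 F. \<beta> i * \<zeta> i) / sqrt (\<Sum>i\<in>insert j0 F. (\<beta> i)\<^sup>2)) \<and>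
     (\<forall>\<zeta>. (\<Sum>i\<in>insert j0 F. (\<Psi> \<zeta> i)\<^sup>2) = (\<Sum>i\<in>insert j0 F. (\<zeta> i)\<^sup>2))"
proof (induction F rule: finite_induct)
  case empty
  have "sgn (\<beta> j0) * (\<beta> j0 * \<zeta> j0) / sqrt ((\<beta> j0)\<^sup>2) = \<zeta> j0" for \<zeta> :: "'i \<Rightarrow> real"
    using b0 by (cases "\<beta> j0 > 0") (auto simp: sgn_if)
  then show ?case
    by (intro exI[of _ "\<lambda>x. x"]) (simp add: mpres_id)
next
  case (insert l F)
  then obtain \<Psi> where P: "mpres I \<Psi>" "\<forall>\<zeta> x. x \<notin> insert j0 F \<longrightarrow> \<Psi> \<zeta> x = \<zeta> x"
     "\<forall>\<zeta>. \<Psi> \<zeta> j0 = sgn (\<beta> j0) * (\<Sum>i\<in>insert j0 F. \<beta> i * \<zeta> i) / sqrt (\<Sum>i\<in>insert j0 F. (\<beta> i)\<^sup>2)"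
     "\<forall>\<zeta>. (\<Sum>i\<in>insert j0 F. (\<Psi> \<zeta> i)\<^sup>2) = (\<Sum>i\<in>insert j0 F. (\<zeta> i)\<^sup>2)"
    by auto
  have l: "l \<noteq> j0" "l \<notin> F" "l \<in> I" using insert by auto
  define S where "S = (\<Sum>i\<in>insert j0 F. (\<beta> i)\<^sup>2)"
  define S' where "S' = S + (\<beta> l)\<^sup>2"
  have Spos: "S > 0"
  proof -
    have "(\<beta> j0)\<^sup>2 \<le> S" unfolding S_def
      by (rule member_le_sum) (use insert in auto)
    moreover have "(\<beta> j0)\<^sup>2 > 0" using b0 by simp
    ultimately show ?thesis by linarith
  qed
  have S'pos: "S' > 0" using Spos unfolding S'_def by (simp add: add_pos_nonneg)
  define s where "s = sqrt S / sqrt S'"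
  define t where "t = sgn (\<beta> j0) * \<beta> l / sqrt S'"
  have sgn2: "(sgn (\<beta> j0))\<^sup>2 = 1" using b0 by (simp add: sgn_if)
  have s0: "s \<noteq> 0" using Spos S'pos by (simp add: s_def)
  have s2: "s\<^sup>2 = S / S'" using Spos S'pos by (simp add: s_def power_divide)
  have t2: "t\<^sup>2 = (\<beta> l)\<^sup>2 / S'" using S'pos sgn2 by (simp add: t_def power_divide power_mult_distrib)
  have st: "s\<^sup>2 + t\<^sup>2 = 1"
    unfolding s2 t2 using S'pos by (simp add: add_divide_distrib[symmetric] S'_def[symmetric])
  define G where "G = (\<lambda>\<zeta>::'i\<Rightarrow>real. \<zeta>(j0 := s*\<zeta> j0 + t*\<zeta> l, l := t*\<zeta> j0 - s*\<zeta> l))"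
  have mG: "mpres I G" unfolding G_def
    by (rule mpres_givens[OF fin j0 l(3)]) (use l s0 st in auto)
  show ?case
  proof (intro exI[of _ "\<lambda>x. G (\<Psi> x)"] conjI allI impI)
    show "mpres I (\<lambda>x. G (\<Psi> x))" by (rule mpres_comp[OF P(1) mG])
  next
    fix \<zeta> x assume "x \<notin> insert j0 (insert l F)"
    then show "G (\<Psi> \<zeta>) x = \<zeta> x" using P(2) by (auto simp: G_def)
  next
    fix \<zeta> :: "'i \<Rightarrow> real"
    have Pl: "\<Psi> \<zeta> l = \<zeta> l" using P(2) l by auto
    have sums: "(\<Sum>i\<in>insert j0 (insert l F). \<beta> i * \<zeta> i) = (\<Sum>i\<in>insert j0 F. \<beta> i * \<zeta> i) + \<beta> l * \<zeta> l"
      "(\<Sum>i\<in>insert j0 (insert l F). (\<beta> i)\<^sup>2) = S'"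
      using insert l by (auto simp: S'_def S_def insert_commute)
    show "G (\<Psi> \<zeta>) j0 = sgn (\<beta> j0) * (\<Sum>i\<in>insert j0 (insert l F). \<beta> i * \<zeta> i) / sqrt (\<Sum>i\<in>insert j0 (insert l F). (\<beta> i)\<^sup>2)"
      unfolding sums using l Pl P(3) Spos S'pos
      by (simp add: G_def s_def t_def S_def[symmetric] field_simps)
  next
    fix \<zeta> :: "'i \<Rightarrow> real"
    have Pl: "\<Psi> \<zeta> l = \<zeta> l" using P(2) l by auto
    have fin2: "finite (insert j0 F)" using insert by auto
    have e1: "(\<Sum>i\<in>insert j0 (insert l F). (G (\<Psi> \<zeta>) i)\<^sup>2) = (\<Sum>i\<in>F. (\<Psi> \<zeta> i)\<^sup>2) + (G (\<Psi> \<zeta>) j0)\<^sup>2 + (G (\<Psi> \<zeta>) l)\<^sup>2"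
    proof -
      have "(\<Sum>i\<in>F. (G (\<Psi> \<zeta>) i)\<^sup>2) = (\<Sum>i\<in>F. (\<Psi> \<zeta> i)\<^sup>2)"
        by (rule sum.cong) (use insert l in \<open>auto simp: G_def\<close>)
      then show ?thesis using insert l by (simp add: insert_commute)
    qed
    have rot: "(G (\<Psi> \<zeta>) j0)\<^sup>2 + (G (\<Psi> \<zeta>) l)\<^sup>2 = (\<Psi> \<zeta> j0)\<^sup>2 + (\<Psi> \<zeta> l)\<^sup>2"
    proof -
      have "(G (\<Psi> \<zeta>) j0)\<^sup>2 + (G (\<Psi> \<zeta>) l)\<^sup>2 = (s\<^sup>2 + t\<^sup>2) * ((\<Psi> \<zeta> j0)\<^sup>2 + (\<Psi> \<zeta> l)\<^sup>2)"
        using l by (simp add: G_def algebra_simps power2_eq_square)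
      then show ?thesis using st by simp
    qed
    have e2: "(\<Sum>i\<in>insert j0 F. (\<Psi> \<zeta> i)\<^sup>2) = (\<Sum>i\<in>F. (\<Psi> \<zeta> i)\<^sup>2) + (\<Psi> \<zeta> j0)\<^sup>2"
      using insert by simp
    have e3: "(\<Sum>i\<in>insert j0 (insert l F). (\<zeta> i)\<^sup>2) = (\<Sum>i\<in>insert j0 F. (\<zeta> i)\<^sup>2) + (\<zeta> l)\<^sup>2"
      using insert l by (simp add: insert_commute)
    show "(\<Sum>i\<in>insert j0 (insert l F). (G (\<Psi> \<zeta>) i)\<^sup>2) = (\<Sum>i\<in>insert j0 (insert l F). (\<zeta> i)\<^sup>2)"
      unfolding e1 e3 using rot e2 P(4) Pl by simp
  qed
qed

lemma column:
  fixes \<beta> :: "'i \<Rightarrow> real"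
  assumes fin: "finite I" and J: "J \<subseteq> I" "j0 \<in> J" and b0: "\<beta> j0 \<noteq> 0"
  shows "\<exists>\<Psi>. mpres I \<Psi> \<and>
     (\<forall>\<zeta> x. x \<notin> J \<longrightarrow> \<Psi> \<zeta> x = \<zeta> x) \<and>
     (\<forall>\<zeta>. \<Psi> \<zeta> j0 = sgn (\<beta> j0) * (\<Sum>i\<in>J. \<beta> i * \<zeta> i) / sqrt (\<Sum>i\<in>J. (\<beta> i)\<^sup>2)) \<and>
     (\<forall>\<zeta>. (\<Sum>i\<in>J. (\<Psi> \<zeta> i)\<^sup>2) = (\<Sum>i\<in>J. (\<zeta> i)\<^sup>2))"
proof -
  have e: "insert j0 (J - {j0}) = J" using J by auto
  have f: "finite (J - {j0})" using fin J finite_subset by blast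
  have j0I: "j0 \<in> I" using J by auto
  show ?thesis
    using column_aux[of I j0 \<beta> "J - {j0}", OF fin j0I b0 f] J unfolding e by blast
qed


lemma coord_meas[measurable]: "(\<lambda>\<eta>. \<eta> x) \<in> borel_measurable (PN I)"
proof (cases "x \<in> I")
  case True then show ?thesis by simp
next
  case False
  show ?thesis
    by (rule measurable_cong[where f="\<lambda>_. undefined", THEN iffD1])
       (use False in \<open>auto simp: space_PiM PiE_def extensional_def\<close>)
qed

lemma mpres_nn: "mpres I \<Psi> \<Longrightarrow> g \<in> borel_measurable (PN I) \<Longrightarrow>
   (\<integral>\<^sup>+\<zeta>. g (\<Psi> \<zeta>) \<partial>PN I) = integral\<^sup>N (PN I) g"
  unfolding mpres_def by blast

lemma mpres_meas: "mpres I \<Psi> \<Longrightarrow> \<Psi> \<in> PN I \<rightarrow>\<^sub>M PN I"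
  unfolding mpres_def by blast

lemma prob_PN: "prob_space (PN I)"
  by (rule prob_space_PiM) (simp add: prob_sn)

lemma finite_PN[simp]: "finite_measure (PN I)"
  using prob_PN prob_space_def by blast

lemma marginal:
  assumes fin: "finite I" and j: "j \<in> I" and g[measurable]: "g \<in> borel_measurable borel"
  shows "(\<integral>\<^sup>+\<eta>. g (\<eta> j) \<partial>PN I) = (\<integral>\<^sup>+u. g u \<partial>\<mu>N)"
proof -
  have I: "I = insert j (I - {j})" using j by auto
  have "(\<integral>\<^sup>+\<eta>. g (\<eta> j) \<partial>PN I) = (\<integral>\<^sup>+x. \<integral>\<^sup>+u. g ((x(j:=u)) j) \<partial>\<mu>N \<partial>PN (I - {j}))"
    apply (subst I)
    apply (rule snp.product_nn_integral_insert)
    using fin by auto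
  also have "\<dots> = (\<integral>\<^sup>+x. (\<integral>\<^sup>+u. g u \<partial>\<mu>N) \<partial>PN (I - {j}))" by simp
  also have "\<dots> = (\<integral>\<^sup>+u. g u \<partial>\<mu>N)"
    using prob_space.emeasure_space_1[OF prob_PN[of "I - {j}"]] by simp
  finally show ?thesis .
qed

definition Phi :: "real \<Rightarrow> real" where "Phi c = measure \<mu>N {..c}"

interpretation snrd: real_distribution \<mu>N
  unfolding real_distribution_def real_distribution_axioms_def using prob_sn by simp

lemma Phi_cdf: "Phi = cdf \<mu>N"
  by (simp add: fun_eq_iff Phi_def cdf_def)

lemma sn_singleton: "emeasure \<mu>N {x} = 0"
proof -
  have "emeasure \<mu>N {x} = (\<integral>\<^sup>+y. ennreal (std_normal_density y) * indicator {x} y \<partial>lborel)"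
    unfolding sn_def' by (simp add: emeasure_density)
  also have "\<dots> = 0"
    by (rule nn_integral_0_iff_AE[THEN iffD2]) (auto intro: AE_mp[OF AE_lborel_singleton[of x]])
  finally show ?thesis .
qed

lemma Phi_cont: "isCont Phi x"
  unfolding Phi_cdf snrd.isCont_cdf using sn_singleton by (simp add: measure_def)

lemma Phi_mono: "x \<le> y \<Longrightarrow> Phi x \<le> Phi y"
  unfolding Phi_cdf by (rule snrd.cdf_nondecreasing)

lemma Phi_top: "(Phi \<longlongrightarrow> 1) at_top"
  unfolding Phi_cdf by (rule snrd.cdf_lim_at_top_prob)

lemma Phi_bot: "(Phi \<longlongrightarrow> 0) at_bot"
  unfolding Phi_cdf by (rule snrd.cdf_lim_at_bot)

lemma Phi_nonneg: "0 \<le> Phi x" by (simp add: Phi_def)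
lemma Phi_le1: "Phi x \<le> 1"
  unfolding Phi_cdf by (rule snrd.cdf_bounded_prob)

lemma Phi_meas[measurable]: "Phi \<in> borel_measurable borel"
  using Phi_cont by (intro borel_measurable_continuous_onI continuous_at_imp_continuous_on) auto

lemma sn_le: "emeasure \<mu>N {u. u \<le> c} = ennreal (Phi c)"
proof -
  have "{u. u \<le> c} = {..c}" by auto
  then show ?thesis
    by (simp add: Phi_def snrd.emeasure_eq_measure)
qed

lemma sn_le_sgn:
  assumes "e = 1 \<or> e = -1"
  shows "emeasure \<mu>N {u. e * u \<le> c} = ennreal (Phi c)"
  using assms
proof
  assume "e = 1" then show ?thesis using sn_le by simp
next
  assume e: "e = -1"
  have "emeasure \<mu>N {u. e * u \<le> c} = (\<integral>\<^sup>+u. indicator {u. e * u \<le> c} u \<partial>\<mu>N)"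
    by (rule nn_integral_indicator[symmetric]) simp
  also have "\<dots> = (\<integral>\<^sup>+u. indicator {u. u \<le> c} (- u) \<partial>\<mu>N)"
    by (intro nn_integral_cong) (use e in \<open>auto split: split_indicator\<close>)
  also have "\<dots> = (\<integral>\<^sup>+u. indicator {u. u \<le> c} u \<partial>\<mu>N)"
    by (rule sn_flip) measurable
  also have "\<dots> = ennreal (Phi c)"
    using sn_le by (subst nn_integral_indicator) auto
  finally show ?thesis .
qed

lemma fixed_coef:
  fixes \<beta> :: "'i \<Rightarrow> real"
  assumes fin: "finite N" and J: "J \<subseteq> N" "j0 \<in> J" and b0: "\<beta> j0 \<noteq> 0"
  shows "emeasure (PN N) {x\<in>space (PN N). (\<Sum>j\<in>J. \<beta> j * x j) \<le> c}
     = ennreal (Phi (c / sqrt (\<Sum>j\<in>J. (\<beta> j)\<^sup>2)))"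
proof -
  obtain \<Psi> where P: "mpres N \<Psi>" "\<forall>\<zeta>. \<Psi> \<zeta> j0 = sgn (\<beta> j0) * (\<Sum>i\<in>J. \<beta> i * \<zeta> i) / sqrt (\<Sum>i\<in>J. (\<beta> i)\<^sup>2)"
    using column[of N J j0 \<beta>, OF fin J b0] by blast
  define B where "B = sqrt (\<Sum>i\<in>J. (\<beta> i)\<^sup>2)"
  define e where "e = sgn (\<beta> j0)"
  have Bpos: "B > 0"
  proof -
    have "(\<beta> j0)\<^sup>2 \<le> (\<Sum>i\<in>J. (\<beta> i)\<^sup>2)"
      by (rule member_le_sum) (use J fin finite_subset in auto)
    then show ?thesis using b0 unfolding B_def
      by (metis not_less power2_less_0 real_sqrt_gt_zero zero_less_power2 dual_order.strict_trans1)
  qed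
  have e: "e = 1 \<or> e = -1" using b0 by (auto simp: e_def sgn_if)
  have ee: "e * e = 1" using e by auto
  have ev: "((\<Sum>j\<in>J. \<beta> j * x j) \<le> c) = (e * \<Psi> x j0 \<le> c / B)" for x
  proof -
    have "e * \<Psi> x j0 = (\<Sum>j\<in>J. \<beta> j * x j) / B"
      using P(2) ee by (simp add: e_def[symmetric] B_def[symmetric] mult.assoc[symmetric])
    then show ?thesis using Bpos by (simp add: pos_le_divide_eq)
  qed
  have j0N: "j0 \<in> N" using J by auto
  have "emeasure (PN N) {x\<in>space (PN N). (\<Sum>j\<in>J. \<beta> j * x j) \<le> c}
      = (\<integral>\<^sup>+x. indicator {x\<in>space (PN N). (\<Sum>j\<in>J. \<beta> j * x j) \<le> c} x \<partial>PN N)"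
    by (rule nn_integral_indicator[symmetric]) measurable
  also have "\<dots> = (\<integral>\<^sup>+x. indicator {u. e * u \<le> c / B} (\<Psi> x j0) \<partial>PN N)"
    by (intro nn_integral_cong) (auto simp: ev split: split_indicator)
  also have "\<dots> = (\<integral>\<^sup>+x. indicator {u. e * u \<le> c / B} (x j0) \<partial>PN N)"
  proof -
    have gm: "(\<lambda>x. indicator {u. e * u \<le> c / B} (x j0) :: ennreal) \<in> borel_measurable (PN N)"
      by measurable
    from mpres_nn[OF P(1) gm] show ?thesis by simp
  qed
  also have "\<dots> = (\<integral>\<^sup>+u. indicator {u. e * u \<le> c / B} u \<partial>\<mu>N)"
    by (rule marginal[OF fin j0N]) measurable
  also have "\<dots> = ennreal (Phi (c / B))"
    using sn_le_sgn[OF e] by (subst nn_integral_indicator) auto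
  finally show ?thesis by (simp add: B_def)
qed


lemma mpres_sets: "mpres I \<Psi> \<Longrightarrow> {\<eta>\<in>space (PN I). Q \<eta>} \<in> sets (PN I) \<Longrightarrow>
   {\<zeta>\<in>space (PN I). Q (\<Psi> \<zeta>)} \<in> sets (PN I)"
proof -
  assume m: "mpres I \<Psi>" and S: "{\<eta>\<in>space (PN I). Q \<eta>} \<in> sets (PN I)"
  have "{\<zeta>\<in>space (PN I). Q (\<Psi> \<zeta>)} = \<Psi> -` {\<eta>\<in>space (PN I). Q \<eta>} \<inter> space (PN I)"
    using measurable_space[OF mpres_meas[OF m]] by auto
  then show ?thesis using measurable_sets[OF mpres_meas[OF m] S] by simp
qed

lemma mpres_emeasure:
  assumes m: "mpres I \<Psi>" and S: "{\<eta>\<in>space (PN I). Q \<eta>} \<in> sets (PN I)"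
  shows "emeasure (PN I) {\<zeta>\<in>space (PN I). Q (\<Psi> \<zeta>)} = emeasure (PN I) {\<eta>\<in>space (PN I). Q \<eta>}"
proof -
  have sp: "\<zeta> \<in> space (PN I) \<Longrightarrow> \<Psi> \<zeta> \<in> space (PN I)" for \<zeta>
    using measurable_space[OF mpres_meas[OF m]] by auto
  have gm: "indicator {\<eta>\<in>space (PN I). Q \<eta>} \<in> borel_measurable (PN I)"
    using S by simp
  have "emeasure (PN I) {\<zeta>\<in>space (PN I). Q (\<Psi> \<zeta>)} = (\<integral>\<^sup>+\<zeta>. indicator {\<zeta>\<in>space (PN I). Q (\<Psi> \<zeta>)} \<zeta> \<partial>PN I)"
    by (rule nn_integral_indicator[symmetric]) (rule mpres_sets[OF m S])
  also have "\<dots> = (\<integral>\<^sup>+\<zeta>. indicator {\<eta>\<in>space (PN I). Q \<eta>} (\<Psi> \<zeta>) \<partial>PN I)"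
    by (intro nn_integral_cong) (auto simp: sp split: split_indicator)
  also have "\<dots> = (\<integral>\<^sup>+\<eta>. indicator {\<eta>\<in>space (PN I). Q \<eta>} \<eta> \<partial>PN I)"
    by (rule mpres_nn[OF m gm])
  also have "\<dots> = emeasure (PN I) {\<eta>\<in>space (PN I). Q \<eta>}"
    by (rule nn_integral_indicator[OF S])
  finally show ?thesis .
qed

lemma mpres_measure:
  assumes m: "mpres I \<Psi>" and S: "{\<eta>\<in>space (PN I). Q \<eta>} \<in> sets (PN I)"
  shows "measure (PN I) {\<zeta>\<in>space (PN I). Q (\<Psi> \<zeta>)} = measure (PN I) {\<eta>\<in>space (PN I). Q \<eta>}"
  using mpres_emeasure[OF m S] by (simp add: measure_def)

lemma mpres_AE:
  assumes m: "mpres I \<Psi>" and S: "{\<eta>\<in>space (PN I). \<not> Q \<eta>} \<in> sets (PN I)"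
    and ae: "AE \<eta> in PN I. Q \<eta>"
  shows "AE \<zeta> in PN I. Q (\<Psi> \<zeta>)"
proof -
  have "emeasure (PN I) {\<eta>\<in>space (PN I). \<not> Q \<eta>} = 0"
    using ae S by (simp add: AE_iff_measurable[OF _ refl])
  then have "emeasure (PN I) {\<zeta>\<in>space (PN I). \<not> Q (\<Psi> \<zeta>)} = 0"
    using mpres_emeasure[OF m S] by simp
  then show ?thesis
    using mpres_sets[OF m S] by (simp add: AE_iff_measurable[OF _ refl])
qed

lemma coord_ae_nz:
  assumes fin: "finite I" and j: "j \<in> I"
  shows "AE \<eta> in PN I. \<eta> j \<noteq> 0"
proof -
  have S: "{\<eta>\<in>space (PN I). \<eta> j = 0} \<in> sets (PN I)" by measurable
  have "emeasure (PN I) {\<eta>\<in>space (PN I). \<eta> j = 0} = (\<integral>\<^sup>+\<eta>. indicator {\<eta>\<in>space (PN I). \<eta> j = 0} \<eta> \<partial>PN I)"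
    by (rule nn_integral_indicator[symmetric, OF S])
  also have "\<dots> = (\<integral>\<^sup>+\<eta>. indicator {0} (\<eta> j) \<partial>PN I)"
    by (intro nn_integral_cong) (auto split: split_indicator)
  also have "\<dots> = (\<integral>\<^sup>+u. indicator {0} u \<partial>\<mu>N)"
    by (rule marginal[OF fin j]) simp
  also have "\<dots> = 0" using sn_singleton by simp
  finally show ?thesis
    by (subst AE_iff_measurable[OF _ refl]) (use S in auto)
qed

lemma master:
  fixes a :: "('i \<Rightarrow> real) \<Rightarrow> 'i \<Rightarrow> real" and y :: "('i \<Rightarrow> real) \<Rightarrow> real"
  assumes fin: "finite I" and NR: "N \<inter> R = {}" "R \<union> N = I" and J: "J \<subseteq> N" "j0 \<in> J"
   and am: "\<And>j. (\<lambda>\<eta>. a \<eta> j) \<in> borel_measurable (PN I)" "\<And>j. (\<lambda>r. a r j) \<in> borel_measurable (PN R)"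
   and ym: "y \<in> borel_measurable (PN I)" "y \<in> borel_measurable (PN R)"
   and dep: "\<And>\<eta> \<eta>'. (\<forall>i\<in>R. \<eta> i = \<eta>' i) \<Longrightarrow> a \<eta> = a \<eta>' \<and> y \<eta> = y \<eta>'"
   and nz: "AE r in PN R. a r j0 \<noteq> 0"
  shows "measure (PN I) {\<eta>\<in>space (PN I). (\<Sum>j\<in>J. a \<eta> j * \<eta> j) \<le> y \<eta>}
     = (\<integral>r. Phi (y r / sqrt (\<Sum>j\<in>J. (a r j)\<^sup>2)) \<partial>PN R)"
proof -
  have finN: "finite N" and finR: "finite R" using fin NR by auto
  have NR': "R \<inter> N = {}" using NR by auto
  define A where "A = {\<eta>\<in>space (PN I). (\<Sum>j\<in>J. a \<eta> j * \<eta> j) \<le> y \<eta>}"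
  have Am: "A \<in> sets (PN I)"
    unfolding A_def using am(1) ym(1) by measurable
  have fm: "indicator A \<in> borel_measurable (PN (R \<union> N))" using Am NR by simp
  define G where "G r = (\<integral>r. Phi (y r / sqrt (\<Sum>j\<in>J. (a r j)\<^sup>2)) \<partial>PN R)" for r :: "'i \<Rightarrow> real"
  have Gm: "(\<lambda>r. Phi (y r / sqrt (\<Sum>j\<in>J. (a r j)\<^sup>2))) \<in> borel_measurable (PN R)"
    using am(2) ym(2) by measurable
  have int: "integrable (PN R) (\<lambda>r. Phi (y r / sqrt (\<Sum>j\<in>J. (a r j)\<^sup>2)))"
    by (rule finite_measure.integrable_const_bound[where B=1]) (auto simp: Phi_nonneg Phi_le1 Gm)
  have inner: "(\<integral>\<^sup>+x. indicator A (merge R N (r, x)) \<partial>PN N)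
      = ennreal (Phi (y r / sqrt (\<Sum>j\<in>J. (a r j)\<^sup>2)))"
    if r: "r \<in> space (PN R)" and nzr: "a r j0 \<noteq> 0" for r
  proof -
    have ind: "indicator A (merge R N (r, x)) = indicator {x\<in>space (PN N). (\<Sum>j\<in>J. a r j * x j) \<le> y r} x"
      if x: "x \<in> space (PN N)" for x
    proof -
      have ms: "merge R N (r, x) \<in> space (PN I)"
        using measurable_space[OF measurable_merge[of R N "\<lambda>_. \<mu>N"], of "(r,x)"] r x NR
        by (simp add: space_pair_measure)
      have d: "a (merge R N (r, x)) = a r \<and> y (merge R N (r, x)) = y r"
        by (rule dep) (simp add: merge_def)
      have xs: "(\<Sum>j\<in>J. a r j * merge R N (r, x) j) = (\<Sum>j\<in>J. a r j * x j)"
        by (rule sum.cong) (use J NR in \<open>auto simp: merge_def\<close>)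
      show ?thesis using ms x d xs by (simp add: A_def split: split_indicator)
    qed
    have "(\<integral>\<^sup>+x. indicator A (merge R N (r, x)) \<partial>PN N)
        = (\<integral>\<^sup>+x. indicator {x\<in>space (PN N). (\<Sum>j\<in>J. a r j * x j) \<le> y r} x \<partial>PN N)"
      by (rule nn_integral_cong) (simp add: ind)
    also have "\<dots> = emeasure (PN N) {x\<in>space (PN N). (\<Sum>j\<in>J. a r j * x j) \<le> y r}"
      by (rule nn_integral_indicator) measurable
    also have "\<dots> = ennreal (Phi (y r / sqrt (\<Sum>j\<in>J. (a r j)\<^sup>2)))"
      by (rule fixed_coef[of N J j0 "a r", OF finN J nzr])
    finally show ?thesis .
  qed
  have "emeasure (PN I) A = (\<integral>\<^sup>+\<eta>. indicator A \<eta> \<partial>PN (R \<union> N))"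
    using Am NR by simp
  also have "\<dots> = (\<integral>\<^sup>+r. \<integral>\<^sup>+x. indicator A (merge R N (r, x)) \<partial>PN N \<partial>PN R)"
    by (rule snp.product_nn_integral_fold[OF NR' finR finN fm])
  also have "\<dots> = (\<integral>\<^sup>+r. ennreal (Phi (y r / sqrt (\<Sum>j\<in>J. (a r j)\<^sup>2))) \<partial>PN R)"
    by (rule nn_integral_cong_AE) (use nz in \<open>auto simp: inner elim!: AE_mp\<close>)
  also have "\<dots> = ennreal (\<integral>r. Phi (y r / sqrt (\<Sum>j\<in>J. (a r j)\<^sup>2)) \<partial>PN R)"
    by (rule nn_integral_eq_integral[OF int]) (simp add: Phi_nonneg)
  finally have "emeasure (PN I) A = ennreal (\<integral>r. Phi (y r / sqrt (\<Sum>j\<in>J. (a r j)\<^sup>2)) \<partial>PN R)" .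
  moreover have "0 \<le> (\<integral>r. Phi (y r / sqrt (\<Sum>j\<in>J. (a r j)\<^sup>2)) \<partial>PN R)"
    by (simp add: Phi_nonneg)
  ultimately show ?thesis unfolding A_def[symmetric] by (simp add: measure_def)
qed


lemma Inf_cdf:
  fixes F :: "real \<Rightarrow> real"
  assumes mono: "\<And>x y. x \<le> y \<Longrightarrow> F x \<le> F y" and rc: "\<And>x. continuous (at_right x) F"
    and bot: "(F \<longlongrightarrow> 0) at_bot" and top: "(F \<longlongrightarrow> 1) at_top" and a: "0 < a" "a < 1"
  shows "Inf {x. a \<le> F x} \<le> t \<longleftrightarrow> a \<le> F t"
    and "a \<le> F (Inf {x. a \<le> F x})"
    and "bdd_below {x. a \<le> F x}" "{x. a \<le> F x} \<noteq> {}"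
proof -
  let ?S = "{x. a \<le> F x}"
  have "eventually (\<lambda>x. a < F x) at_top" using order_tendstoD(1)[OF top a(2)] .
  then obtain x0 where "a < F x0" by (auto simp: eventually_at_top_linorder)
  then show ne: "?S \<noteq> {}" by (auto intro!: exI[of _ x0])
  have "eventually (\<lambda>x. F x < a) at_bot" using order_tendstoD(2)[OF bot a(1)] .
  then obtain b where b: "\<And>x. x \<le> b \<Longrightarrow> F x < a" by (auto simp: eventually_at_bot_linorder)
  have lb: "\<And>x. x \<in> ?S \<Longrightarrow> b \<le> x"
    using b by (metis linorder_not_le mem_Collect_eq nless_le)
  then show bdd: "bdd_below ?S" by (auto simp: bdd_below_def)
  define q where "q = Inf ?S"
  have Fq: "a \<le> F q"
  proof (rule tendsto_lowerbound)
    show "(F \<longlongrightarrow> F q) (at_right q)" using rc[of q] by (simp add: continuous_within)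
    show "eventually (\<lambda>x. a \<le> F x) (at_right q)"
    proof (rule eventually_at_rightI[where b="q+1"])
      fix x assume "x \<in> {q<..<q+1}"
      then have "Inf ?S < x" by (simp add: q_def)
      then obtain s where "s \<in> ?S" "s < x" using cInf_less_iff[OF ne bdd] by auto
      then show "a \<le> F x" using mono[of s x] by auto
    qed simp
  qed simp
  then show "a \<le> F (Inf ?S)" by (simp add: q_def)
  show "Inf ?S \<le> t \<longleftrightarrow> a \<le> F t"
  proof
    assume "Inf ?S \<le> t" then show "a \<le> F t" using Fq mono[of q t] by (simp add: q_def)
  next
    assume "a \<le> F t" then show "Inf ?S \<le> t" by (intro cInf_lower bdd) simp
  qed
qed

lemma Inf_cdf_cont:
  fixes F :: "real \<Rightarrow> real"
  assumes mono: "\<And>x y. x \<le> y \<Longrightarrow> F x \<le> F y" and cont: "\<And>x. isCont F x"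
    and bot: "(F \<longlongrightarrow> 0) at_bot" and top: "(F \<longlongrightarrow> 1) at_top" and a: "0 < a" "a < 1"
  shows "F (Inf {x. a \<le> F x}) = a" and "{x. a \<le> F x} = {Inf {x. a \<le> F x}..}"
proof -
  let ?S = "{x. a \<le> F x}"
  have rc: "\<And>x. continuous (at_right x) F" using cont by (simp add: continuous_at_imp_continuous_within)
  note I = Inf_cdf[OF mono rc bot top a]
  define q where "q = Inf ?S"
  have "F q \<le> a"
  proof (rule tendsto_upperbound)
    show "(F \<longlongrightarrow> F q) (at_left q)"
      using continuous_at_imp_continuous_within[OF cont[of q], of "{..<q}"] by (simp add: continuous_within)
    show "eventually (\<lambda>x. F x \<le> a) (at_left q)"
    proof (rule eventually_at_leftI[where a="q-1"])
      fix x assume x: "x \<in> {q-1<..<q}"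
      show "F x \<le> a"
      proof (rule ccontr)
        assume "\<not> F x \<le> a"
        then have "x \<in> ?S" by simp
        then have "q \<le> x" unfolding q_def by (intro cInf_lower I(3))
        then show False using x by simp
      qed
    qed simp
  qed simp
  then show "F (Inf ?S) = a" using I(2) by (simp add: q_def)
  show "?S = {Inf ?S..}" using I(1) by auto
qed

lemma quantile_le:
  assumes M: "prob_space M" and X: "X \<in> borel_measurable M" and a: "0 < a" "a < 1"
  shows "quantile M X a \<le> t \<longleftrightarrow> a \<le> measure M {w\<in>space M. X w \<le> t}"
proof -
  interpret prob_space M by (rule M)
  define D where "D = distr M borel X"
  interpret D: real_distribution D unfolding D_def using X by simp
  have c: "cdf D x = measure M {w\<in>space M. X w \<le> x}" for x
    unfolding cdf_def D_def using X
    by (subst measure_distr) (auto intro!: arg_cong[where f="measure M"])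
  have q: "quantile M X a = Inf {x. a \<le> cdf D x}"
    unfolding quantile_def c ..
  show ?thesis
    unfolding q c[symmetric]
    by (rule Inf_cdf(1)[OF D.cdf_nondecreasing D.cdf_is_right_cont D.cdf_lim_at_bot D.cdf_lim_at_top_prob a])
qed

lemma H_props:
  fixes g :: "'a \<Rightarrow> real"
  assumes M: "prob_space M" and g[measurable]: "g \<in> borel_measurable M" and gpos: "AE r in M. 0 < g r"
  defines "H \<equiv> \<lambda>z. \<integral>r. Phi (z * g r) \<partial>M"
  shows "\<And>x y. x \<le> y \<Longrightarrow> H x \<le> H y" "\<And>x. isCont H x" "(H \<longlongrightarrow> 0) at_bot" "(H \<longlongrightarrow> 1) at_top"
proof -
  interpret prob_space M by (rule M)
  have int: "integrable M (\<lambda>r. Phi (z * g r))" for z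
    by (rule integrable_const_bound[where B=1]) (auto simp: Phi_nonneg Phi_le1)
  show "H x \<le> H y" if "x \<le> y" for x y
    unfolding H_def
  proof (rule integral_mono_AE[OF int int])
    show "AE r in M. Phi (x * g r) \<le> Phi (y * g r)"
      using gpos by eventually_elim (use that in \<open>auto intro!: Phi_mono mult_right_mono\<close>)
  qed
  show "isCont H x" for x
  proof (rule continuous_at_sequentiallyI)
    fix u assume u: "u \<longlonglongrightarrow> x"
    show "(\<lambda>n. H (u n)) \<longlonglongrightarrow> H x"
      unfolding H_def
    proof (rule integral_dominated_convergence[where w="\<lambda>_. 1"])
      show "AE r in M. (\<lambda>n. Phi (u n * g r)) \<longlonglongrightarrow> Phi (x * g r)"
        by (intro AE_I2 isCont_tendsto_compose[OF Phi_cont] tendsto_intros u)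
      show "AE r in M. norm (Phi (u n * g r)) \<le> 1" for n
        by (simp add: Phi_nonneg Phi_le1)
    qed auto
  qed
  show "(H \<longlongrightarrow> 1) at_top"
  proof -
    have "((\<lambda>z. \<integral>r. Phi (z * g r) \<partial>M) \<longlongrightarrow> (\<integral>r. 1 \<partial>M)) at_top"
    proof (rule integral_dominated_convergence_at_top[where w="\<lambda>_. 1"])
      show "AE r in M. ((\<lambda>z. Phi (z * g r)) \<longlongrightarrow> 1) at_top"
        using gpos
      proof eventually_elim
        fix r assume r: "0 < g r"
        have "LIM z at_top. z * g r :> at_top"
          using filterlim_tendsto_pos_mult_at_top[OF tendsto_const r filterlim_ident]
          by (simp add: mult.commute)
        then show "((\<lambda>z. Phi (z * g r)) \<longlongrightarrow> 1) at_top"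
          using filterlim_compose[OF Phi_top] by blast
      qed
      show "\<forall>\<^sub>F i in at_top. AE x in M. norm (Phi (i * g x)) \<le> 1"
        by (simp add: Phi_nonneg Phi_le1)
    qed auto
    then show ?thesis by (simp add: H_def prob_space)
  qed
  show "(H \<longlongrightarrow> 0) at_bot"
  proof -
    have "((\<lambda>z. \<integral>r. Phi ((-z) * g r) \<partial>M) \<longlongrightarrow> (\<integral>r. 0 \<partial>M)) at_top"
    proof (rule integral_dominated_convergence_at_top[where w="\<lambda>_. 1"])
      show "AE r in M. ((\<lambda>z. Phi ((-z) * g r)) \<longlongrightarrow> 0) at_top"
        using gpos
      proof eventually_elim
        fix r assume r: "0 < g r"
        have "LIM z at_top. z * g r :> at_top"
          using filterlim_tendsto_pos_mult_at_top[OF tendsto_const r filterlim_ident]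
          by (simp add: mult.commute)
        then have "LIM z at_top. (-z) * g r :> at_bot"
          by (simp add: filterlim_uminus_at_bot)
        then show "((\<lambda>z. Phi ((-z) * g r)) \<longlongrightarrow> 0) at_top"
          using filterlim_compose[OF Phi_bot] by blast
      qed
      show "\<forall>\<^sub>F i in at_top. AE x in M. norm (Phi ((-i) * g x)) \<le> 1"
        by (simp add: Phi_nonneg Phi_le1)
    qed auto
    then show ?thesis unfolding filterlim_at_bot_mirror by (simp add: H_def)
  qed
qed


lemma multicol:
  fixes J :: "nat \<Rightarrow> 'i set" and j0 :: "nat \<Rightarrow> 'i" and \<beta> :: "nat \<Rightarrow> 'i \<Rightarrow> real"
  assumes fin: "finite I" and K: "finite K"
    and col: "\<And>k. k \<in> K \<Longrightarrow> J k \<subseteq> I \<and> j0 k \<in> J k \<and> \<beta> k (j0 k) \<noteq> 0"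
    and disj: "\<And>k k'. k \<in> K \<Longrightarrow> k' \<in> K \<Longrightarrow> k \<noteq> k' \<Longrightarrow> J k \<inter> J k' = {}"
  shows "\<exists>\<Psi>. mpres I \<Psi> \<and> (\<forall>\<zeta> x. x \<notin> (\<Union>k\<in>K. J k) \<longrightarrow> \<Psi> \<zeta> x = \<zeta> x) \<and>
     (\<forall>k\<in>K. \<forall>\<zeta>. \<Psi> \<zeta> (j0 k) = sgn (\<beta> k (j0 k)) * (\<Sum>i\<in>J k. \<beta> k i * \<zeta> i) / sqrt (\<Sum>i\<in>J k. (\<beta> k i)\<^sup>2)) \<and>
     (\<forall>k\<in>K. \<forall>\<zeta>. (\<Sum>i\<in>J k. (\<Psi> \<zeta> i)\<^sup>2) = (\<Sum>i\<in>J k. (\<zeta> i)\<^sup>2))"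
  using K col disj
proof (induction K rule: finite_induct)
  case empty
  show ?case by (intro exI[of _ "\<lambda>x. x"]) (simp add: mpres_id)
next
  case (insert k K)
  have IH: "\<exists>\<Psi>. mpres I \<Psi> \<and> (\<forall>\<zeta> x. x \<notin> (\<Union>k\<in>K. J k) \<longrightarrow> \<Psi> \<zeta> x = \<zeta> x) \<and>
     (\<forall>k\<in>K. \<forall>\<zeta>. \<Psi> \<zeta> (j0 k) = sgn (\<beta> k (j0 k)) * (\<Sum>i\<in>J k. \<beta> k i * \<zeta> i) / sqrt (\<Sum>i\<in>J k. (\<beta> k i)\<^sup>2)) \<and>
     (\<forall>k\<in>K. \<forall>\<zeta>. (\<Sum>i\<in>J k. (\<Psi> \<zeta> i)\<^sup>2) = (\<Sum>i\<in>J k. (\<zeta> i)\<^sup>2))"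
  proof (rule insert.IH)
    show "\<And>k. k \<in> K \<Longrightarrow> J k \<subseteq> I \<and> j0 k \<in> J k \<and> \<beta> k (j0 k) \<noteq> 0"
      using insert.prems(1) by simp
    show "\<And>k k'. k \<in> K \<Longrightarrow> k' \<in> K \<Longrightarrow> k \<noteq> k' \<Longrightarrow> J k \<inter> J k' = {}"
      using insert.prems(2) by simp
  qed
  obtain \<Psi> where P: "mpres I \<Psi>" "\<forall>\<zeta> x. x \<notin> (\<Union>k\<in>K. J k) \<longrightarrow> \<Psi> \<zeta> x = \<zeta> x"
     "\<forall>k\<in>K. \<forall>\<zeta>. \<Psi> \<zeta> (j0 k) = sgn (\<beta> k (j0 k)) * (\<Sum>i\<in>J k. \<beta> k i * \<zeta> i) / sqrt (\<Sum>i\<in>J k. (\<beta> k i)\<^sup>2)"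
     "\<forall>k\<in>K. \<forall>\<zeta>. (\<Sum>i\<in>J k. (\<Psi> \<zeta> i)\<^sup>2) = (\<Sum>i\<in>J k. (\<zeta> i)\<^sup>2)"
    using IH by blast
  have ck: "J k \<subseteq> I" "j0 k \<in> J k" "\<beta> k (j0 k) \<noteq> 0" using insert.prems(1)[of k] by auto
  obtain \<Phi> where Q: "mpres I \<Phi>" "\<forall>\<zeta> x. x \<notin> J k \<longrightarrow> \<Phi> \<zeta> x = \<zeta> x"
     "\<forall>\<zeta>. \<Phi> \<zeta> (j0 k) = sgn (\<beta> k (j0 k)) * (\<Sum>i\<in>J k. \<beta> k i * \<zeta> i) / sqrt (\<Sum>i\<in>J k. (\<beta> k i)\<^sup>2)"
     "\<forall>\<zeta>. (\<Sum>i\<in>J k. (\<Phi> \<zeta> i)\<^sup>2) = (\<Sum>i\<in>J k. (\<zeta> i)\<^sup>2)"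
    using column[of I "J k" "j0 k" "\<beta> k", OF fin ck] by blast
  have dj: "i \<in> J k \<Longrightarrow> i \<notin> (\<Union>k\<in>K. J k)" for i
    using insert.prems(2)[of k] insert.hyps(2) by blast
  have dj2: "k' \<in> K \<Longrightarrow> i \<in> J k' \<Longrightarrow> i \<notin> J k" for i k'
    using insert.prems(2)[of k k'] insert.hyps(2) by blast
  have PJ: "i \<in> J k \<Longrightarrow> \<Psi> \<zeta> i = \<zeta> i" for i \<zeta> using P(2) dj by blast
  show ?case
  proof (intro exI[of _ "\<lambda>x. \<Phi> (\<Psi> x)"] conjI allI impI ballI)
    show "mpres I (\<lambda>x. \<Phi> (\<Psi> x))" by (rule mpres_comp[OF P(1) Q(1)])
  next
    fix \<zeta> x assume "x \<notin> (\<Union>k\<in>insert k K. J k)"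
    then show "\<Phi> (\<Psi> \<zeta>) x = \<zeta> x" using P(2) Q(2) by auto
  next
    fix k' \<zeta> assume k': "k' \<in> insert k K"
    show "\<Phi> (\<Psi> \<zeta>) (j0 k') = sgn (\<beta> k' (j0 k')) * (\<Sum>i\<in>J k'. \<beta> k' i * \<zeta> i) / sqrt (\<Sum>i\<in>J k'. (\<beta> k' i)\<^sup>2)"
    proof (cases "k' = k")
      case True
      have "(\<Sum>i\<in>J k. \<beta> k i * \<Psi> \<zeta> i) = (\<Sum>i\<in>J k. \<beta> k i * \<zeta> i)"
        by (rule sum.cong) (auto simp: PJ)
      then show ?thesis using True Q(3) by simp
    next
      case False
      then have "k' \<in> K" using k' by auto
      moreover have "j0 k' \<notin> J k" using dj2[OF \<open>k' \<in> K\<close>] insert.prems(1)[of k'] \<open>k' \<in> K\<close> by auto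
      ultimately show ?thesis using P(3) Q(2) by auto
    qed
  next
    fix k' \<zeta> assume k': "k' \<in> insert k K"
    show "(\<Sum>i\<in>J k'. (\<Phi> (\<Psi> \<zeta>) i)\<^sup>2) = (\<Sum>i\<in>J k'. (\<zeta> i)\<^sup>2)"
    proof (cases "k' = k")
      case True
      have "(\<Sum>i\<in>J k. (\<Psi> \<zeta> i)\<^sup>2) = (\<Sum>i\<in>J k. (\<zeta> i)\<^sup>2)"
        by (rule sum.cong) (auto simp: PJ)
      then show ?thesis using True Q(4) by simp
    next
      case False
      then have k'K: "k' \<in> K" using k' by auto
      have "(\<Sum>i\<in>J k'. (\<Phi> (\<Psi> \<zeta>) i)\<^sup>2) = (\<Sum>i\<in>J k'. (\<Psi> \<zeta> i)\<^sup>2)"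
        by (rule sum.cong) (use Q(2) dj2[OF k'K] in auto)
      then show ?thesis using P(4) k'K by simp
    qed
  qed
qed


locale cl =
  fixes n :: nat and C :: "nat \<Rightarrow> nat \<Rightarrow> real" and \<gamma> :: real and f \<sigma> :: "nat \<Rightarrow> real"
  assumes n2: "n \<ge> 2" and Cpos: "\<And>i k. i + k \<le> n \<Longrightarrow> C i k > 0"
    and spos: "\<And>k. 1 \<le> k \<Longrightarrow> k \<le> n - 1 \<Longrightarrow> \<sigma> k > 0"
    and fn: "f n = 1" and sn: "\<sigma> n = 0"
begin

definition cc :: "nat \<Rightarrow> nat \<Rightarrow> real" where "cc k i = C i (k - 1) powr \<gamma>"
definition Sc :: "nat \<Rightarrow> real" where "Sc k = (\<Sum>i=0..n-k. cc k i)"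
definition Aq :: "(nat \<times> nat \<Rightarrow> real) \<Rightarrow> nat \<Rightarrow> real" where
  "Aq \<zeta> k = (\<Sum>i=0..n-k. sqrt (cc k i) * \<zeta> (i, k)) / sqrt (Sc k)"
definition Mc :: "(nat \<times> nat \<Rightarrow> real) \<Rightarrow> nat \<Rightarrow> real" where
  "Mc \<eta> k = (if k = 0 then 0 else (\<Sum>i=1..n-k. (\<eta> (i, k))\<^sup>2) / real (n - k))"
definition pp :: "nat \<Rightarrow> real" where "pp i = C i (n - i) * C i (n - i) powr (- \<gamma> / 2)"
definition qq :: "nat \<Rightarrow> real" where "qq i = C i (n - i) / sqrt (Sc (n - i + 1))"

lemma cc_pos: "1 \<le> k \<Longrightarrow> k \<le> n \<Longrightarrow> i \<le> n - k \<Longrightarrow> cc k i > 0"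
proof -
  assume k: "1 \<le> k" "k \<le> n" "i \<le> n - k"
  then have "i + (k - 1) \<le> n" by linarith
  then have "C i (k - 1) > 0" by (rule Cpos)
  then show ?thesis unfolding cc_def by simp
qed

lemma Sc_pos: "1 \<le> k \<Longrightarrow> k \<le> n \<Longrightarrow> Sc k > 0"
  unfolding Sc_def by (rule sum_pos) (auto intro: cc_pos)

lemma powr_half: "0 < c \<Longrightarrow> c powr (- \<gamma> / 2) = 1 / sqrt (c powr \<gamma>)"
proof -
  assume c: "0 < c"
  have "sqrt (c powr \<gamma>) = (c powr \<gamma>) powr (1/2)" by (simp add: powr_half_sqrt)
  also have "\<dots> = c powr (\<gamma> / 2)" by (simp add: powr_powr)
  finally have "sqrt (c powr \<gamma>) = c powr (\<gamma> / 2)" .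
  moreover have "c powr (- \<gamma> / 2) = c powr (- (\<gamma> / 2))" by simp
  ultimately show ?thesis by (simp only: powr_minus_divide)
qed

lemma Rp_Aq: "1 \<le> k \<Longrightarrow> k \<le> n \<Longrightarrow> Rp n C \<gamma> \<zeta> k = Aq \<zeta> k / sqrt (Sc k)"
proof -
  assume k: "1 \<le> k" "k \<le> n"
  have S: "Sc k > 0" using Sc_pos k .
  have "Rp n C \<gamma> \<zeta> k = (\<Sum>i=0..n-k. sqrt (cc k i) * \<zeta> (i, k)) / Sc k"
    unfolding Rp_def cc_def[symmetric] Sc_def[symmetric] by (simp add: sum_divide_distrib mult.commute)
  also have "\<dots> = Aq \<zeta> k / sqrt (Sc k)"
  proof -
    have "sqrt (Sc k) * sqrt (Sc k) = Sc k" using S by simp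
    then show ?thesis unfolding Aq_def by (simp add: divide_divide_eq_left)
  qed
  finally show ?thesis .
qed

lemma Mp_Aq:
  assumes k: "1 \<le> k" "k \<le> n"
  shows "Mp n C \<gamma> \<zeta> k = ((\<Sum>i=0..n-k. (\<zeta> (i, k))\<^sup>2) - (Aq \<zeta> k)\<^sup>2) / real (n - k)"
proof -
  define R where "R = Rp n C \<gamma> \<zeta> k"
  have S: "Sc k > 0" using Sc_pos k .
  have pt: "cc k i * (\<zeta> (i, k) / sqrt (cc k i) - R)\<^sup>2
      = (\<zeta> (i, k))\<^sup>2 - 2 * R * (sqrt (cc k i) * \<zeta> (i, k)) + R\<^sup>2 * cc k i" if i: "i \<in> {0..n-k}" for i
  proof -
    have c: "cc k i > 0" using cc_pos[OF k] i by auto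
    have s2: "sqrt (cc k i) * sqrt (cc k i) = cc k i" using c by simp
    have sp: "sqrt (cc k i) > 0" using c by simp
    show ?thesis using sp s2
      by (simp add: power2_eq_square field_simps)
  qed
  define X where "X = (\<Sum>i=0..n-k. sqrt (cc k i) * \<zeta> (i, k))"
  have e0: "(\<Sum>i=0..n-k. cc k i * (\<zeta> (i, k) / sqrt (cc k i) - R)\<^sup>2)
     = (\<Sum>i=0..n-k. (\<zeta> (i, k))\<^sup>2 - 2 * R * (sqrt (cc k i) * \<zeta> (i, k)) + R\<^sup>2 * cc k i)"
    by (rule sum.cong) (simp_all add: pt)
  have e1: "(\<Sum>i=0..n-k. cc k i * (\<zeta> (i, k) / sqrt (cc k i) - R)\<^sup>2)
     = (\<Sum>i=0..n-k. (\<zeta> (i, k))\<^sup>2) - 2 * R * X + R\<^sup>2 * Sc k"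
    unfolding e0 by (simp add: sum.distrib sum_subtractf sum_distrib_left Sc_def X_def)
  have X: "X = Aq \<zeta> k * sqrt (Sc k)"
    unfolding Aq_def X_def using S by simp
  have Rv: "R = Aq \<zeta> k / sqrt (Sc k)" unfolding R_def by (rule Rp_Aq[OF k])
  have ss: "sqrt (Sc k) * sqrt (Sc k) = Sc k" using S by simp
  have e: "(\<Sum>i=0..n-k. cc k i * (\<zeta> (i, k) / sqrt (cc k i) - R)\<^sup>2)
     = (\<Sum>i=0..n-k. (\<zeta> (i, k))\<^sup>2) - (Aq \<zeta> k)\<^sup>2"
  proof -
    have "(\<Sum>i=0..n-k. (\<zeta> (i, k))\<^sup>2) - 2 * R * X + R\<^sup>2 * Sc k = (\<Sum>i=0..n-k. (\<zeta> (i, k))\<^sup>2) - (Aq \<zeta> k)\<^sup>2"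
      unfolding X Rv using S ss by (simp add: power2_eq_square field_simps)
    then show ?thesis using e1 by simp
  qed
  show ?thesis
    unfolding Mp_def cc_def[symmetric] R_def[symmetric] e by simp
qed

lemma Mp_nonneg: "0 \<le> Mp n C \<gamma> \<zeta> k"
  unfolding Mp_def by (intro mult_nonneg_nonneg sum_nonneg) auto

lemma fhat_eq:
  assumes k: "1 \<le> k" "k \<le> n - 1"
  shows "fhat n C \<gamma> f \<sigma> \<zeta> k = f k + \<sigma> k * Rp n C \<gamma> \<zeta> k"
proof -
  have kn: "k \<le> n" "k \<noteq> n" using k n2 by auto
  have S: "Sc k > 0" using Sc_pos k kn by auto
  have pt: "cc k i * Fobs C \<gamma> f \<sigma> \<zeta> i k = f k * cc k i + \<sigma> k * (sqrt (cc k i) * \<zeta> (i, k))"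
    if i: "i \<in> {0..n-k}" for i
  proof -
    have c: "cc k i > 0" using cc_pos[OF k(1) kn(1)] i by auto
    have s2: "sqrt (cc k i) * sqrt (cc k i) = cc k i" using c by simp
    have "i + (k - 1) \<le> n" using i k by auto
    then have "C i (k - 1) > 0" by (rule Cpos)
    then have h: "C i (k - 1) powr (- \<gamma> / 2) = 1 / sqrt (cc k i)" unfolding cc_def by (rule powr_half)
    show ?thesis unfolding Fobs_def h using c s2
      by (simp add: field_simps)
  qed
  have ss: "sqrt (Sc k) * sqrt (Sc k) = Sc k" using S by simp
  have "fhat n C \<gamma> f \<sigma> \<zeta> k = (\<Sum>i=0..n-k. cc k i * Fobs C \<gamma> f \<sigma> \<zeta> i k) / Sc k"
    unfolding fhat_def cc_def[symmetric] Sc_def[symmetric] using kn by simp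
  also have "\<dots> = (f k * Sc k + \<sigma> k * (\<Sum>i=0..n-k. sqrt (cc k i) * \<zeta> (i, k))) / Sc k"
  proof -
    have "(\<Sum>i=0..n-k. cc k i * Fobs C \<gamma> f \<sigma> \<zeta> i k) = (\<Sum>i=0..n-k. f k * cc k i + \<sigma> k * (sqrt (cc k i) * \<zeta> (i, k)))"
      by (rule sum.cong) (simp_all add: pt)
    then show ?thesis by (simp add: sum.distrib sum_distrib_left Sc_def)
  qed
  also have "\<dots> = f k + \<sigma> k * Rp n C \<gamma> \<zeta> k"
    unfolding Rp_Aq[OF k(1) kn(1)] Aq_def using S
    using ss by (simp add: field_simps)
  finally show ?thesis .
qed

end


context cl begin

lemma kk: "2 \<le> i \<Longrightarrow> i \<le> n \<Longrightarrow> 1 \<le> n - i + 1 \<and> n - i + 1 \<le> n - 1 \<and> n - i + 1 \<noteq> n \<and> n - (n - i + 1) = i - 1 \<and> n - i + 1 - 1 = n - i"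
  by auto

lemma n1: "Suc (n - Suc 0) = n" "n - 1 + 1 = n" using n2 by auto

lemma kk1: "2 \<le> i \<Longrightarrow> i \<le> n \<Longrightarrow> 1 \<le> n - i + 1" and kk2: "2 \<le> i \<Longrightarrow> i \<le> n \<Longrightarrow> n - i + 1 \<le> n - 1"
  and kk3: "2 \<le> i \<Longrightarrow> i \<le> n \<Longrightarrow> n - i + 1 \<le> n"
  by auto

lemma sighat_eq:
  assumes k: "1 \<le> k" "k \<le> n - 1"
  shows "sighat n C \<gamma> f \<sigma> \<zeta> k = \<sigma> k * sqrt (Mp n C \<gamma> \<zeta> k)"
proof -
  have kn: "k \<le> n" "k \<noteq> n" using k n2 by auto
  have d: "Fobs C \<gamma> f \<sigma> \<zeta> i k - fhat n C \<gamma> f \<sigma> \<zeta> k = \<sigma> k * (\<zeta> (i, k) / sqrt (cc k i) - Rp n C \<gamma> \<zeta> k)"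
    if i: "i \<in> {0..n-k}" for i
  proof -
    have "i + (k - 1) \<le> n" using i k by auto
    then have "C i (k - 1) > 0" by (rule Cpos)
    then have h: "C i (k - 1) powr (- \<gamma> / 2) = 1 / sqrt (cc k i)" unfolding cc_def by (rule powr_half)
    show ?thesis unfolding Fobs_def fhat_eq[OF k] h by (simp add: algebra_simps)
  qed
  have "(\<Sum>i=0..n-k. C i (k - 1) powr \<gamma> * (Fobs C \<gamma> f \<sigma> \<zeta> i k - fhat n C \<gamma> f \<sigma> \<zeta> k)\<^sup>2)
     = (\<sigma> k)\<^sup>2 * (\<Sum>i=0..n-k. cc k i * (\<zeta> (i, k) / sqrt (cc k i) - Rp n C \<gamma> \<zeta> k)\<^sup>2)"
    unfolding sum_distrib_left cc_def[symmetric]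
    by (rule sum.cong) (simp_all add: d power_mult_distrib)
  then have "sighat n C \<gamma> f \<sigma> \<zeta> k = sqrt ((\<sigma> k)\<^sup>2 * Mp n C \<gamma> \<zeta> k)"
    unfolding sighat_def Mp_def cc_def using kn by simp
  also have "\<dots> = \<sigma> k * sqrt (Mp n C \<gamma> \<zeta> k)"
    using spos[OF k] by (simp add: real_sqrt_mult)
  finally show ?thesis .
qed

lemma sighat_sq: "1 \<le> k \<Longrightarrow> k \<le> n - 1 \<Longrightarrow> (sighat n C \<gamma> f \<sigma> \<zeta> k)\<^sup>2 = (\<sigma> k)\<^sup>2 * Mp n C \<gamma> \<zeta> k"
  by (simp add: sighat_eq power_mult_distrib Mp_nonneg)

lemma Ztrue_diff:
  assumes i: "2 \<le> i" "i \<le> n"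
  shows "Ztrue n C \<gamma> f \<sigma> \<zeta> i - Zhat n C \<gamma> f \<sigma> \<zeta> i
      = \<sigma> (n - i + 1) * (pp i * \<zeta> (i, n - i + 1) - qq i * Aq \<zeta> (n - i + 1))"
proof -
  note K = kk[OF i]
  have "Ztrue n C \<gamma> f \<sigma> \<zeta> i - Zhat n C \<gamma> f \<sigma> \<zeta> i
     = \<sigma> (n - i + 1) * (C i (n - i) powr (- \<gamma> / 2) * \<zeta> (i, n - i + 1) - Rp n C \<gamma> \<zeta> (n - i + 1)) * C i (n - i)"
    unfolding Ztrue_def Zhat_def fhat_eq[OF kk1[OF i] kk2[OF i]] by (simp add: algebra_simps)
  also have "\<dots> = \<sigma> (n - i + 1) * (pp i * \<zeta> (i, n - i + 1) - qq i * Aq \<zeta> (n - i + 1))"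
    unfolding pp_def qq_def Rp_Aq[OF kk1[OF i] kk3[OF i]] by (simp add: algebra_simps)
  finally show ?thesis .
qed

lemma Ztrue_sum:
  "(\<Sum>i=1..n. Ztrue n C \<gamma> f \<sigma> \<zeta> i) = (\<Sum>i=1..n. Zhat n C \<gamma> f \<sigma> \<zeta> i)
    + (\<Sum>i=2..n. \<sigma> (n - i + 1) * (pp i * \<zeta> (i, n - i + 1) - qq i * Aq \<zeta> (n - i + 1)))"
proof -
  have one: "Ztrue n C \<gamma> f \<sigma> \<zeta> 1 = 0" "Zhat n C \<gamma> f \<sigma> \<zeta> 1 = 0"
    unfolding Ztrue_def Zhat_def fhat_def using fn sn n1 by simp_all
  have "(\<Sum>i=1..n. Ztrue n C \<gamma> f \<sigma> \<zeta> i) - (\<Sum>i=1..n. Zhat n C \<gamma> f \<sigma> \<zeta> i)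
      = (\<Sum>i=1..n. Ztrue n C \<gamma> f \<sigma> \<zeta> i - Zhat n C \<gamma> f \<sigma> \<zeta> i)"
    by (simp add: sum_subtractf)
  also have "\<dots> = (\<Sum>i=2..n. Ztrue n C \<gamma> f \<sigma> \<zeta> i - Zhat n C \<gamma> f \<sigma> \<zeta> i)"
    using n2 one by (simp add: sum.atLeast_Suc_atMost numeral_2_eq_2)
  also have "\<dots> = (\<Sum>i=2..n. \<sigma> (n - i + 1) * (pp i * \<zeta> (i, n - i + 1) - qq i * Aq \<zeta> (n - i + 1)))"
    by (rule sum.cong) (simp_all add: Ztrue_diff)
  finally show ?thesis by simp
qed

definition asimE :: "(nat \<Rightarrow> real) \<Rightarrow> (nat \<Rightarrow> real) \<Rightarrow> real" where
  "asimE m m' = ((\<Sum>i=2..n. ((\<sigma> (n - i + 1))\<^sup>2 * m (n - i + 1) * vv n C \<gamma> i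
       / (\<Sum>j=2..n. (\<sigma> (n - j + 1))\<^sup>2 * m (n - j + 1) * vv n C \<gamma> j)) / m' (n - i + 1))
     * (\<Sum>i=2..n. ww n C \<gamma> \<sigma> i * m' (n - i + 1))) powr (- 1 / 2)"

lemma asim_eq: "asim n C \<gamma> f \<sigma> \<zeta> \<zeta>' = asimE (Mp n C \<gamma> \<zeta>) (Mp n C \<gamma> \<zeta>')"
proof -
  have w: "ww n C \<gamma> (sighat n C \<gamma> f \<sigma> \<zeta>) i = (\<sigma> (n - i + 1))\<^sup>2 * Mp n C \<gamma> \<zeta> (n - i + 1) * vv n C \<gamma> i
       / (\<Sum>j=2..n. (\<sigma> (n - j + 1))\<^sup>2 * Mp n C \<gamma> \<zeta> (n - j + 1) * vv n C \<gamma> j)" if i: "i \<in> {2..n}" for i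
  proof -
    have "(\<Sum>j=2..n. (sighat n C \<gamma> f \<sigma> \<zeta> (n - j + 1))\<^sup>2 * vv n C \<gamma> j)
        = (\<Sum>j=2..n. (\<sigma> (n - j + 1))\<^sup>2 * Mp n C \<gamma> \<zeta> (n - j + 1) * vv n C \<gamma> j)"
      by (rule sum.cong) (use kk in \<open>auto simp: sighat_sq\<close>)
    then show ?thesis unfolding ww_def using kk[of i] i by (simp add: sighat_sq)
  qed
  show ?thesis unfolding asim_def asimE_def
    by (rule arg_cong[where f="\<lambda>x. x powr (- 1 / 2)"], rule arg_cong2[where f="(*)"])
       (rule sum.cong, simp_all add: w)
qed

lemma Zm_diff:
  assumes i: "2 \<le> i" "i \<le> n"
  shows "Zmodel n C \<gamma> f \<sigma> \<zeta> \<zeta>' i - Zhat n C \<gamma> f \<sigma> \<zeta> i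
      = \<sigma> (n - i + 1) * sqrt (Mp n C \<gamma> \<zeta> (n - i + 1) / Mp n C \<gamma> \<zeta>' (n - i + 1))
        * (pp i * \<zeta>' (i, n - i + 1) - qq i * Aq \<zeta>' (n - i + 1))"
proof -
  note K = kk[OF i]
  have ss: "sigsim n C \<gamma> f \<sigma> \<zeta> \<zeta>' (n - i + 1) = \<sigma> (n - i + 1) * sqrt (Mp n C \<gamma> \<zeta> (n - i + 1) / Mp n C \<gamma> \<zeta>' (n - i + 1))"
  proof -
    have "sigsim n C \<gamma> f \<sigma> \<zeta> \<zeta>' (n - i + 1) = sqrt ((\<sigma> (n - i + 1))\<^sup>2 * (Mp n C \<gamma> \<zeta> (n - i + 1) / Mp n C \<gamma> \<zeta>' (n - i + 1)))"
      unfolding sigsim_def using K sighat_sq[OF kk1[OF i] kk2[OF i], of \<zeta>] by simp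
    also have "\<dots> = sqrt ((\<sigma> (n - i + 1))\<^sup>2) * sqrt (Mp n C \<gamma> \<zeta> (n - i + 1) / Mp n C \<gamma> \<zeta>' (n - i + 1))"
      by (rule real_sqrt_mult)
    also have "\<dots> = \<sigma> (n - i + 1) * sqrt (Mp n C \<gamma> \<zeta> (n - i + 1) / Mp n C \<gamma> \<zeta>' (n - i + 1))"
      using spos[OF kk1[OF i] kk2[OF i]] by simp
    finally show ?thesis .
  qed
  have "Zmodel n C \<gamma> f \<sigma> \<zeta> \<zeta>' i - Zhat n C \<gamma> f \<sigma> \<zeta> i
     = sigsim n C \<gamma> f \<sigma> \<zeta> \<zeta>' (n - i + 1) * (C i (n - i) powr (- \<gamma> / 2) * \<zeta>' (i, n - i + 1) - Rp n C \<gamma> \<zeta>' (n - i + 1)) * C i (n - i)"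
    unfolding Zmodel_def Zhat_def fsim_def using K by (simp add: algebra_simps)
  also have "\<dots> = sigsim n C \<gamma> f \<sigma> \<zeta> \<zeta>' (n - i + 1) * (pp i * \<zeta>' (i, n - i + 1) - qq i * Aq \<zeta>' (n - i + 1))"
    unfolding pp_def qq_def Rp_Aq[OF kk1[OF i] kk3[OF i]] by (simp add: algebra_simps)
  finally show ?thesis unfolding ss .
qed

lemma Zadj_eq:
  "Zadj n C \<gamma> f \<sigma> \<zeta> \<zeta>' = (\<Sum>i=1..n. Zhat n C \<gamma> f \<sigma> \<zeta> i)
     + (\<Sum>i=2..n. asimE (Mp n C \<gamma> \<zeta>) (Mp n C \<gamma> \<zeta>') * \<sigma> (n - i + 1)
          * sqrt (Mp n C \<gamma> \<zeta> (n - i + 1) / Mp n C \<gamma> \<zeta>' (n - i + 1))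
          * (pp i * \<zeta>' (i, n - i + 1) - qq i * Aq \<zeta>' (n - i + 1)))"
proof -
  define a where "a = asim n C \<gamma> f \<sigma> \<zeta> \<zeta>'"
  have one: "Zmodel n C \<gamma> f \<sigma> \<zeta> \<zeta>' 1 = 0" "Zhat n C \<gamma> f \<sigma> \<zeta> 1 = 0"
    unfolding Zmodel_def Zhat_def fhat_def fsim_def sigsim_def using n1 by simp_all
  have "Zadj n C \<gamma> f \<sigma> \<zeta> \<zeta>' - (\<Sum>i=1..n. Zhat n C \<gamma> f \<sigma> \<zeta> i)
     = (\<Sum>i=1..n. a * (Zmodel n C \<gamma> f \<sigma> \<zeta> \<zeta>' i - Zhat n C \<gamma> f \<sigma> \<zeta> i))"
    unfolding Zadj_def a_def[symmetric] by (simp add: sum_subtractf[symmetric] algebra_simps)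
  also have "\<dots> = (\<Sum>i=2..n. a * (Zmodel n C \<gamma> f \<sigma> \<zeta> \<zeta>' i - Zhat n C \<gamma> f \<sigma> \<zeta> i))"
    using n2 one by (simp add: sum.atLeast_Suc_atMost numeral_2_eq_2)
  also have "\<dots> = (\<Sum>i=2..n. asimE (Mp n C \<gamma> \<zeta>) (Mp n C \<gamma> \<zeta>') * \<sigma> (n - i + 1)
          * sqrt (Mp n C \<gamma> \<zeta> (n - i + 1) / Mp n C \<gamma> \<zeta>' (n - i + 1))
          * (pp i * \<zeta>' (i, n - i + 1) - qq i * Aq \<zeta>' (n - i + 1)))"
    by (rule sum.cong) (simp_all add: Zm_diff a_def asim_eq mult.assoc)
  finally show ?thesis by simp
qed

end

context cl begin

definition TT :: "(nat \<Rightarrow> real) \<Rightarrow> real" where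
  "TT m = (\<Sum>i=2..n. (\<sigma> (n - i + 1))\<^sup>2 * vv n C \<gamma> i * m (n - i + 1))"

lemma Ci_pos: "i \<le> n \<Longrightarrow> C i (n - i) > 0" using Cpos[of i "n - i"] by simp

lemma Sc_alt: "2 \<le> i \<Longrightarrow> i \<le> n \<Longrightarrow> Sc (n - i + 1) = (\<Sum>l=0..i-1. C l (n - i) powr \<gamma>)"
  unfolding Sc_def cc_def by (rule sum.cong) auto

lemma pp_pos: "i \<le> n \<Longrightarrow> pp i > 0"
proof -
  assume i: "i \<le> n"
  have c: "C i (n - i) > 0" using Ci_pos[OF i] .
  then have "C i (n - i) powr (- \<gamma> / 2) > 0" by simp
  then show ?thesis unfolding pp_def using c by simp
qed

lemma vv_eq: assumes i: "2 \<le> i" "i \<le> n" shows "(pp i)\<^sup>2 + (qq i)\<^sup>2 = vv n C \<gamma> i"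
proof -
  have c: "C i (n - i) > 0" using Ci_pos i by simp
  have S: "Sc (n - i + 1) > 0" using Sc_pos kk1[OF i] kk3[OF i] by simp
  have p: "(C i (n - i) powr (- \<gamma> / 2))\<^sup>2 = C i (n - i) powr (- \<gamma>)"
    by (simp add: power2_eq_square powr_add[symmetric])
  have "(pp i)\<^sup>2 = (C i (n - i))\<^sup>2 * C i (n - i) powr (- \<gamma>)"
    unfolding pp_def power_mult_distrib p ..
  moreover have "(qq i)\<^sup>2 = (C i (n - i))\<^sup>2 / Sc (n - i + 1)"
    unfolding qq_def using S by (simp add: power_divide)
  ultimately show ?thesis unfolding vv_def Sc_alt[OF i, symmetric]
    by (simp add: algebra_simps)
qed

lemma vv_pos: "2 \<le> i \<Longrightarrow> i \<le> n \<Longrightarrow> vv n C \<gamma> i > 0"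
proof -
  assume i: "2 \<le> i" "i \<le> n"
  have "(pp i)\<^sup>2 > 0" using pp_pos[of i] i by simp
  then show ?thesis using vv_eq[OF i] by (metis add_pos_nonneg zero_le_power2)
qed

lemma TT_pos: "(\<And>k. 1 \<le> k \<Longrightarrow> k \<le> n - 1 \<Longrightarrow> m k > 0) \<Longrightarrow> TT m > 0"
  unfolding TT_def
proof (rule sum_pos)
  assume m: "\<And>k. 1 \<le> k \<Longrightarrow> k \<le> n - 1 \<Longrightarrow> m k > 0"
  show "finite {2..n}" by simp
  show "{2..n} \<noteq> {}" using n2 by simp
  fix i assume i: "i \<in> {2..n}"
  then have i': "2 \<le> i" "i \<le> n" by auto
  show "0 < (\<sigma> (n - i + 1))\<^sup>2 * vv n C \<gamma> i * m (n - i + 1)"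
    using spos[OF kk1[OF i'] kk2[OF i']] vv_pos[OF i'] m[OF kk1[OF i'] kk2[OF i']] by simp
qed

lemma ww_eq: "i \<in> {2..n} \<Longrightarrow> ww n C \<gamma> \<sigma> i = (\<sigma> (n - i + 1))\<^sup>2 * vv n C \<gamma> i / TT (\<lambda>_. 1)"
  unfolding ww_def TT_def by simp

lemma powr_half_sq: "0 < (z::real) \<Longrightarrow> (z powr (- 1 / 2))\<^sup>2 = 1 / z"
proof -
  assume z: "0 < z"
  have "(z powr (- 1 / 2))\<^sup>2 = z powr (- 1 / 2 + - 1 / 2)"
    by (simp only: power2_eq_square powr_add[symmetric])
  also have "- 1 / 2 + - 1 / 2 = - (1::real)" by simp
  also have "z powr (- 1) = 1 / z powr 1" by (rule powr_minus_divide)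
  also have "z powr 1 = z" using z by simp
  finally show ?thesis .
qed

lemma norm_eq:
  assumes m: "\<And>k. 1 \<le> k \<Longrightarrow> k \<le> n - 1 \<Longrightarrow> m k > 0" and m': "\<And>k. 1 \<le> k \<Longrightarrow> k \<le> n - 1 \<Longrightarrow> m' k > 0"
  shows "(\<Sum>i=2..n. (asimE m m' * \<sigma> (n - i + 1) * sqrt (m (n - i + 1) / m' (n - i + 1)))\<^sup>2 * vv n C \<gamma> i)
     = TT m * TT (\<lambda>_. 1) / TT m'"
proof -
  define W where "W = TT m"
  define S1 where "S1 = TT (\<lambda>_. 1)"
  define T' where "T' = TT m'"
  define V where "V = (\<Sum>i=2..n. (\<sigma> (n - i + 1))\<^sup>2 * vv n C \<gamma> i * (m (n - i + 1) / m' (n - i + 1)))"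
  have Wp: "W > 0" unfolding W_def by (rule TT_pos[OF m])
  have S1p: "S1 > 0" unfolding S1_def by (rule TT_pos) simp
  have T'p: "T' > 0" unfolding T'_def by (rule TT_pos[OF m'])
  have Vp: "V > 0" unfolding V_def
    by (rule TT_pos[of "\<lambda>k. m k / m' k", unfolded TT_def]) (simp add: m m')
  define X where "X = (\<Sum>i=2..n. ((\<sigma> (n - i + 1))\<^sup>2 * m (n - i + 1) * vv n C \<gamma> i
       / (\<Sum>j=2..n. (\<sigma> (n - j + 1))\<^sup>2 * m (n - j + 1) * vv n C \<gamma> j)) / m' (n - i + 1))"
  define Y where "Y = (\<Sum>i=2..n. ww n C \<gamma> \<sigma> i * m' (n - i + 1))"
  have Xv: "X = V / W"
  proof -
    have "(\<Sum>j=2..n. (\<sigma> (n - j + 1))\<^sup>2 * m (n - j + 1) * vv n C \<gamma> j) = W"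
      unfolding W_def TT_def by (rule sum.cong) (simp_all add: algebra_simps)
    then show ?thesis unfolding X_def V_def
      by (simp add: sum_divide_distrib algebra_simps)
  qed
  have Yv: "Y = T' / S1"
    unfolding Y_def T'_def TT_def S1_def[symmetric] sum_divide_distrib
    by (rule sum.cong) (simp_all add: ww_eq S1_def)
  have XYp: "X * Y > 0" unfolding Xv Yv using Vp Wp T'p S1p by simp
  have a2: "(asimE m m')\<^sup>2 = 1 / (X * Y)"
    unfolding asimE_def X_def[symmetric] Y_def[symmetric] by (rule powr_half_sq[OF XYp])
  have "(\<Sum>i=2..n. (asimE m m' * \<sigma> (n - i + 1) * sqrt (m (n - i + 1) / m' (n - i + 1)))\<^sup>2 * vv n C \<gamma> i)
      = (asimE m m')\<^sup>2 * V"
    unfolding V_def sum_distrib_left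
  proof (rule sum.cong)
    fix i assume i: "i \<in> {2..n}"
    then have i': "2 \<le> i" "i \<le> n" by auto
    have "m (n - i + 1) / m' (n - i + 1) \<ge> 0"
      using m[OF kk1[OF i'] kk2[OF i']] m'[OF kk1[OF i'] kk2[OF i']] by simp
    then show "(asimE m m' * \<sigma> (n - i + 1) * sqrt (m (n - i + 1) / m' (n - i + 1)))\<^sup>2 * vv n C \<gamma> i
        = (asimE m m')\<^sup>2 * ((\<sigma> (n - i + 1))\<^sup>2 * vv n C \<gamma> i * (m (n - i + 1) / m' (n - i + 1)))"
      by (simp add: power_mult_distrib)
  qed simp
  also have "\<dots> = W * S1 / T'"
    unfolding a2 Xv Yv using Vp Wp T'p S1p by (simp add: field_simps)
  finally show ?thesis by (simp add: W_def S1_def T'_def)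
qed

lemma asimE_pos:
  assumes m: "\<And>k. 1 \<le> k \<Longrightarrow> k \<le> n - 1 \<Longrightarrow> m k > 0" and m': "\<And>k. 1 \<le> k \<Longrightarrow> k \<le> n - 1 \<Longrightarrow> m' k > 0"
  shows "asimE m m' > 0"
proof -
  have "(\<Sum>i=2..n. ((\<sigma> (n - i + 1))\<^sup>2 * m (n - i + 1) * vv n C \<gamma> i
       / (\<Sum>j=2..n. (\<sigma> (n - j + 1))\<^sup>2 * m (n - j + 1) * vv n C \<gamma> j)) / m' (n - i + 1))
     * (\<Sum>i=2..n. ww n C \<gamma> \<sigma> i * m' (n - i + 1)) \<noteq> 0"
  proof -
    have W: "(\<Sum>j=2..n. (\<sigma> (n - j + 1))\<^sup>2 * m (n - j + 1) * vv n C \<gamma> j) > 0"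
      using TT_pos[OF m] unfolding TT_def by (simp add: algebra_simps)
    have p1: "(\<Sum>i=2..n. ((\<sigma> (n - i + 1))\<^sup>2 * m (n - i + 1) * vv n C \<gamma> i
       / (\<Sum>j=2..n. (\<sigma> (n - j + 1))\<^sup>2 * m (n - j + 1) * vv n C \<gamma> j)) / m' (n - i + 1)) > 0"
    proof (rule sum_pos)
      fix i assume i: "i \<in> {2..n}"
      then have i': "2 \<le> i" "i \<le> n" by auto
      show "0 < (\<sigma> (n - i + 1))\<^sup>2 * m (n - i + 1) * vv n C \<gamma> i
       / (\<Sum>j=2..n. (\<sigma> (n - j + 1))\<^sup>2 * m (n - j + 1) * vv n C \<gamma> j) / m' (n - i + 1)"
        using spos[OF kk1[OF i'] kk2[OF i']] vv_pos[OF i'] m[OF kk1[OF i'] kk2[OF i']]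
          m'[OF kk1[OF i'] kk2[OF i']] W by simp
    qed (use n2 in auto)
    have p2: "(\<Sum>i=2..n. ww n C \<gamma> \<sigma> i * m' (n - i + 1)) > 0"
    proof (rule sum_pos)
      fix i assume i: "i \<in> {2..n}"
      then have i': "2 \<le> i" "i \<le> n" by auto
      have S1: "TT (\<lambda>_. 1) > 0" by (rule TT_pos) simp
      show "0 < ww n C \<gamma> \<sigma> i * m' (n - i + 1)"
        unfolding ww_eq[OF i]
        using spos[OF kk1[OF i'] kk2[OF i']] vv_pos[OF i'] m'[OF kk1[OF i'] kk2[OF i']] S1 by simp
    qed (use n2 in auto)
    show ?thesis using p1 p2 by simp
  qed
  then show ?thesis unfolding asimE_def by simp
qed

lemma asimE_cong: "(\<And>k. 1 \<le> k \<Longrightarrow> k \<le> n - 1 \<Longrightarrow> m1 k = m2 k) \<Longrightarrow> asimE m m1 = asimE m m2"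
  unfolding asimE_def
  by (intro arg_cong[where f="\<lambda>x. x powr (- 1 / 2)"] arg_cong2[where f="(*)"] sum.cong refl)
     (auto simp: kk1 kk2)

lemma TT_cong: "(\<And>k. 1 \<le> k \<Longrightarrow> k \<le> n - 1 \<Longrightarrow> m1 k = m2 k) \<Longrightarrow> TT m1 = TT m2"
  unfolding TT_def by (intro sum.cong refl) (auto simp: kk1 kk2)

end

lemma Zadj_meas2:
  "(\<lambda>p. Zadj n C \<gamma> f \<sigma> (fst p) (snd p)) \<in> borel_measurable (PN I \<Otimes>\<^sub>M PN I)"
  unfolding Zadj_def Zhat_def Zmodel_def fsim_def sigsim_def asim_def ww_def fhat_def sighat_def Mp_def Rp_def Fobs_def
  by measurable

lemma Zadj_meas1:
  "(\<lambda>\<zeta>'. Zadj n C \<gamma> f \<sigma> \<zeta> \<zeta>') \<in> borel_measurable (PN I)"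
  unfolding Zadj_def Zhat_def Zmodel_def fsim_def sigsim_def asim_def ww_def fhat_def sighat_def Mp_def Rp_def Fobs_def
  by measurable

lemma Ztrue_meas:
  "(\<lambda>\<zeta>. \<Sum>i=1..n. Ztrue n C \<gamma> f \<sigma> \<zeta> i) \<in> borel_measurable (PN I)"
  unfolding Ztrue_def by measurable

context cl begin

definition Jset :: "(nat \<times> nat) set" where
  "Jset = (\<lambda>i. (i, n - i + 1)) ` {2..n} \<union> (\<lambda>i. (0, n - i + 1)) ` {2..n}"
definition Nset :: "(nat \<times> nat) set" where
  "Nset = {(i, k). i = 0 \<and> 1 \<le> k \<and> k \<le> n - 1} \<union> {(i, k). 1 \<le> i \<and> i \<le> n \<and> k = n - i + 1}"
definition Rset :: "(nat \<times> nat) set" where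
  "Rset = {(i, k). 1 \<le> k \<and> k \<le> n - 1 \<and> 1 \<le> i \<and> i \<le> n - k}"
definition acoef :: "(nat \<Rightarrow> real) \<Rightarrow> nat \<times> nat \<Rightarrow> real" where
  "acoef c x = (if fst x = 0 then - c (n - snd x + 1) * qq (n - snd x + 1) else c (fst x) * pp (fst x))"

lemma sumJ_gen: "(\<Sum>x\<in>Jset. h x) = (\<Sum>i=2..n. h (i, n - i + 1) + h (0, n - i + 1))"
proof -
  have d: "(\<lambda>i. (i, n - i + 1)) ` {2..n} \<inter> (\<lambda>i. (0, n - i + 1)) ` {2..n} = {}" by auto
  have i1: "inj_on (\<lambda>i. (i, n - i + 1)) {2..n}" by (auto simp: inj_on_def)
  have i2: "inj_on (\<lambda>i. (0::nat, n - i + 1)) {2..n}" by (auto simp: inj_on_def)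
  have "(\<Sum>x\<in>Jset. h x) = (\<Sum>x\<in>(\<lambda>i. (i, n - i + 1)) ` {2..n}. h x) + (\<Sum>x\<in>(\<lambda>i. (0, n - i + 1)) ` {2..n}. h x)"
    unfolding Jset_def by (rule sum.union_disjoint) (use d in auto)
  also have "\<dots> = (\<Sum>i=2..n. h (i, n - i + 1)) + (\<Sum>i=2..n. h (0, n - i + 1))"
    by (simp only: sum.reindex[OF i1] sum.reindex[OF i2] comp_def)
  finally show ?thesis by (simp add: sum.distrib)
qed

lemma sumJ: "(\<Sum>x\<in>Jset. acoef c x * \<eta> x) = (\<Sum>i=2..n. c i * (pp i * \<eta> (i, n - i + 1) - qq i * \<eta> (0, n - i + 1)))"
  unfolding sumJ_gen
  by (rule sum.cong) (auto simp: acoef_def algebra_simps)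

lemma sumJ2: "(\<Sum>x\<in>Jset. (acoef c x)\<^sup>2) = (\<Sum>i=2..n. (c i)\<^sup>2 * vv n C \<gamma> i)"
  unfolding sumJ_gen
proof (rule sum.cong)
  fix i assume i: "i \<in> {2..n}"
  then have i': "2 \<le> i" "i \<le> n" by auto
  have "n - (n - i + 1) + 1 = i" using i' by auto
  then show "(acoef c (i, n - i + 1))\<^sup>2 + (acoef c (0, n - i + 1))\<^sup>2 = (c i)\<^sup>2 * vv n C \<gamma> i"
    using i' by (simp add: acoef_def power_mult_distrib vv_eq[OF i', symmetric] algebra_simps)
qed simp

lemma idx_split: "Rset \<union> Nset = idx n" "Nset \<inter> Rset = {}"
  unfolding Rset_def Nset_def idx_def using n2 by auto

lemma J_sub: "Jset \<subseteq> Nset" "(2, n - 1) \<in> Jset"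
proof -
  show "Jset \<subseteq> Nset" unfolding Jset_def Nset_def by auto
  have "(2, n - 1) = (\<lambda>i. (i, n - i + 1)) 2" using n2 by auto
  then show "(2, n - 1) \<in> Jset" unfolding Jset_def using n2 by auto
qed

lemma fin_idx: "finite (idx n)"
proof -
  have "idx n \<subseteq> {0..n} \<times> {0..n+1}" unfolding idx_def by auto
  then show ?thesis using finite_subset by blast
qed

lemma Mc_dep: "(\<forall>x\<in>Rset. \<eta> x = \<eta>' x) \<Longrightarrow> Mc \<eta> = Mc \<eta>'"
proof
  fix k assume e: "\<forall>x\<in>Rset. \<eta> x = \<eta>' x"
  show "Mc \<eta> k = Mc \<eta>' k"
  proof (cases "k = 0 \<or> k \<ge> n")
    case True then show ?thesis unfolding Mc_def by auto
  next
    case False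
    have "(\<Sum>i=1..n-k. (\<eta> (i, k))\<^sup>2) = (\<Sum>i=1..n-k. (\<eta>' (i, k))\<^sup>2)"
      by (rule sum.cong) (use False e in \<open>auto simp: Rset_def\<close>)
    then show ?thesis unfolding Mc_def by simp
  qed
qed

definition goodm :: "(nat \<Rightarrow> real) \<Rightarrow> bool" where
  "goodm m \<longleftrightarrow> (\<forall>k\<in>{1..n-1}. m k > 0)"

lemma goodmD: "goodm m \<Longrightarrow> 1 \<le> k \<Longrightarrow> k \<le> n - 1 \<Longrightarrow> m k > 0"
  unfolding goodm_def by auto

lemma Mc_meas[measurable]: "(\<lambda>\<eta>. Mc \<eta> k) \<in> borel_measurable (PN S)"
  unfolding Mc_def by measurable

lemma goodm_sets: "{\<eta>\<in>space (PN S). \<not> goodm (Mc \<eta>)} \<in> sets (PN S)"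
  unfolding goodm_def by measurable

lemma AE_good:
  assumes "finite S" "Rset \<subseteq> S"
  shows "AE \<eta> in PN S. goodm (Mc \<eta>)"
proof -
  have "AE \<eta> in PN S. \<forall>k\<in>{1..n-1}. \<eta> (1, k) \<noteq> 0"
  proof (rule AE_finite_allI)
    fix k assume k: "k \<in> {1..n-1}"
    then have "(1, k) \<in> S" using assms(2) unfolding Rset_def by auto
    then show "AE \<eta> in PN S. \<eta> (1, k) \<noteq> 0" by (rule coord_ae_nz[OF assms(1)])
  qed simp
  then show ?thesis
  proof eventually_elim
    fix \<eta> :: "nat \<times> nat \<Rightarrow> real" assume h: "\<forall>k\<in>{1..n-1}. \<eta> (1, k) \<noteq> 0"
    show "goodm (Mc \<eta>)" unfolding goodm_def
    proof
      fix k assume k: "k \<in> {1..n-1}"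
      have "(\<eta> (1, k))\<^sup>2 \<le> (\<Sum>i=1..n-k. (\<eta> (i, k))\<^sup>2)"
        by (rule member_le_sum) (use k in auto)
      moreover have "(\<eta> (1, k))\<^sup>2 > 0" using h k by simp
      ultimately have "(\<Sum>i=1..n-k. (\<eta> (i, k))\<^sup>2) > 0" by linarith
      moreover have "real (n - k) > 0" using k by auto
      ultimately show "Mc \<eta> k > 0" unfolding Mc_def using k by (simp del: of_nat_diff)
    qed
  qed
qed

lemma Psi_exists: "\<exists>\<Psi>. mpres (idx n) \<Psi> \<and>
   (\<forall>\<zeta> k. 1 \<le> k \<longrightarrow> k \<le> n - 1 \<longrightarrow> \<Psi> \<zeta> (0, k) = Aq \<zeta> k) \<and>
   (\<forall>\<zeta> k. 1 \<le> k \<longrightarrow> k \<le> n - 1 \<longrightarrow> Mc (\<Psi> \<zeta>) k = Mp n C \<gamma> \<zeta> k) \<and>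
   (\<forall>\<zeta> i. 1 \<le> i \<longrightarrow> i \<le> n \<longrightarrow> \<Psi> \<zeta> (i, n - i + 1) = \<zeta> (i, n - i + 1))"
proof -
  define Jc where "Jc k = (\<lambda>i. (i, k)) ` {0..n-k}" for k
  define \<beta> where "\<beta> k x = sqrt (cc k (fst x))" for k and x :: "nat \<times> nat"
  have col: "Jc k \<subseteq> idx n \<and> (0, k) \<in> Jc k \<and> \<beta> k (0, k) \<noteq> 0" if k: "k \<in> {1..n-1}" for k
  proof -
    have "Jc k \<subseteq> idx n" unfolding Jc_def idx_def using k by auto
    moreover have "(0, k) \<in> Jc k" unfolding Jc_def by auto
    moreover have "cc k 0 > 0" using cc_pos[of k 0] k by auto
    ultimately show ?thesis unfolding \<beta>_def by simp
  qed
  have disj: "Jc k \<inter> Jc k' = {}" if "k \<noteq> k'" for k k' using that unfolding Jc_def by auto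
  obtain \<Psi> where P: "mpres (idx n) \<Psi>" "\<forall>\<zeta> x. x \<notin> (\<Union>k\<in>{1..n-1}. Jc k) \<longrightarrow> \<Psi> \<zeta> x = \<zeta> x"
     "\<forall>k\<in>{1..n-1}. \<forall>\<zeta>. \<Psi> \<zeta> (0, k) = sgn (\<beta> k (0, k)) * (\<Sum>i\<in>Jc k. \<beta> k i * \<zeta> i) / sqrt (\<Sum>i\<in>Jc k. (\<beta> k i)\<^sup>2)"
     "\<forall>k\<in>{1..n-1}. \<forall>\<zeta>. (\<Sum>i\<in>Jc k. (\<Psi> \<zeta> i)\<^sup>2) = (\<Sum>i\<in>Jc k. (\<zeta> i)\<^sup>2)"
    using multicol[of "idx n" "{1..n-1}" Jc "\<lambda>k. (0, k)" \<beta>, OF fin_idx _ col disj] by auto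
  have inj: "inj_on (\<lambda>i. (i, k)) A" for k and A :: "nat set" by (auto simp: inj_on_def)
  have A: "\<Psi> \<zeta> (0, k) = Aq \<zeta> k" if k: "1 \<le> k" "k \<le> n - 1" for \<zeta> k
  proof -
    have kn: "k \<le> n" using k by auto
    have s1: "(\<Sum>i\<in>Jc k. \<beta> k i * \<zeta> i) = (\<Sum>i=0..n-k. sqrt (cc k i) * \<zeta> (i, k))"
      unfolding Jc_def by (simp add: sum.reindex[OF inj] \<beta>_def)
    have s2: "(\<Sum>i\<in>Jc k. (\<beta> k i)\<^sup>2) = Sc k"
      unfolding Jc_def Sc_def by (simp add: sum.reindex[OF inj] \<beta>_def) (rule sum.cong, auto intro: less_imp_le cc_pos[OF k(1) kn])
    have s3: "sgn (\<beta> k (0, k)) = 1" using cc_pos[OF k(1) kn, of 0] by (simp add: \<beta>_def)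
    have "\<Psi> \<zeta> (0, k) = sgn (\<beta> k (0, k)) * (\<Sum>i\<in>Jc k. \<beta> k i * \<zeta> i) / sqrt (\<Sum>i\<in>Jc k. (\<beta> k i)\<^sup>2)"
      using P(3) k by auto
    then show ?thesis unfolding s1 s2 s3 Aq_def by simp
  qed
  have M: "Mc (\<Psi> \<zeta>) k = Mp n C \<gamma> \<zeta> k" if k: "1 \<le> k" "k \<le> n - 1" for \<zeta> k
  proof -
    have kn: "k \<le> n" using k by auto
    have "(\<Sum>i=0..n-k. (\<Psi> \<zeta> (i, k))\<^sup>2) = (\<Sum>i=0..n-k. (\<zeta> (i, k))\<^sup>2)"
      using P(4) k unfolding Jc_def by (auto simp: sum.reindex[OF inj])
    moreover have "(\<Sum>i=0..n-k. (\<Psi> \<zeta> (i, k))\<^sup>2) = (\<Psi> \<zeta> (0, k))\<^sup>2 + (\<Sum>i=1..n-k. (\<Psi> \<zeta> (i, k))\<^sup>2)"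
      by (simp add: sum.atLeast_Suc_atMost)
    ultimately have "(\<Sum>i=1..n-k. (\<Psi> \<zeta> (i, k))\<^sup>2) = (\<Sum>i=0..n-k. (\<zeta> (i, k))\<^sup>2) - (Aq \<zeta> k)\<^sup>2"
      using A[OF k] by simp
    then show ?thesis unfolding Mc_def Mp_Aq[OF k(1) kn] using k by simp
  qed
  have D: "\<Psi> \<zeta> (i, n - i + 1) = \<zeta> (i, n - i + 1)" if i: "1 \<le> i" "i \<le> n" for \<zeta> i
  proof -
    have "(i, n - i + 1) \<notin> (\<Union>k\<in>{1..n-1}. Jc k)" unfolding Jc_def using i by auto
    then show ?thesis using P(2) by blast
  qed
  show ?thesis using P(1) A M D by blast
qed

end

context cl begin

definition H :: "real \<Rightarrow> real" where
  "H z = (\<integral>r. Phi (z * sqrt (TT (Mc r))) \<partial>PN Rset)"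

abbreviation "S1 \<equiv> TT (\<lambda>_. 1)"

lemma S1_pos: "S1 > 0" by (rule TT_pos) simp

lemma fin_R: "finite Rset"
  using fin_idx idx_split(1) by (metis finite_Un)

lemma TT_meas[measurable]: "(\<lambda>\<eta>. TT (Mc \<eta>)) \<in> borel_measurable (PN S)"
  unfolding TT_def by measurable

lemma H_facts: "\<And>x y. x \<le> y \<Longrightarrow> H x \<le> H y" "\<And>x. isCont H x" "(H \<longlongrightarrow> 0) at_bot" "(H \<longlongrightarrow> 1) at_top"
proof -
  have g: "(\<lambda>r. sqrt (TT (Mc r))) \<in> borel_measurable (PN Rset)" by measurable
  have ae: "AE r in PN Rset. 0 < sqrt (TT (Mc r))"
    using AE_good[OF fin_R order_refl]
    by eventually_elim (auto intro!: TT_pos goodmD)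
  note X = H_props[OF prob_PN g ae]
  show "\<And>x y. x \<le> y \<Longrightarrow> H x \<le> H y" "\<And>x. isCont H x" "(H \<longlongrightarrow> 0) at_bot" "(H \<longlongrightarrow> 1) at_top"
    using X unfolding H_def by auto
qed

definition qa :: "real \<Rightarrow> real" where "qa a = Inf {z. a \<le> H z}"

lemma qa_facts: "0 < a \<Longrightarrow> a < 1 \<Longrightarrow> H (qa a) = a \<and> {z. a \<le> H z} = {qa a..}"
  unfolding qa_def using Inf_cdf_cont[OF H_facts] by blast

definition bf :: "(nat \<Rightarrow> real) \<Rightarrow> (nat \<Rightarrow> real) \<Rightarrow> nat \<Rightarrow> real" where
  "bf m m' i = asimE m m' * \<sigma> (n - i + 1) * sqrt (m (n - i + 1) / m' (n - i + 1))"

lemma bf_meas[measurable]: "(\<lambda>\<eta>. bf m (Mc \<eta>) i) \<in> borel_measurable (PN S)"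
  unfolding bf_def asimE_def by measurable

lemma acoef_bf_meas[measurable]: "(\<lambda>\<eta>. acoef (bf m (Mc \<eta>)) j) \<in> borel_measurable (PN S)"
  unfolding acoef_def by measurable

lemma F_eq:
  assumes g: "goodm (Mp n C \<gamma> \<zeta>)"
  shows "measure (PN (idx n)) {\<zeta>'\<in>space (PN (idx n)). Zadj n C \<gamma> f \<sigma> \<zeta> \<zeta>' \<le> x}
       = H ((x - (\<Sum>i=1..n. Zhat n C \<gamma> f \<sigma> \<zeta> i)) / sqrt (TT (Mp n C \<gamma> \<zeta>) * S1))"
proof -
  obtain \<Psi> where P: "mpres (idx n) \<Psi>"
   "\<And>\<zeta> k. 1 \<le> k \<Longrightarrow> k \<le> n - 1 \<Longrightarrow> \<Psi> \<zeta> (0, k) = Aq \<zeta> k"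
   "\<And>\<zeta> k. 1 \<le> k \<Longrightarrow> k \<le> n - 1 \<Longrightarrow> Mc (\<Psi> \<zeta>) k = Mp n C \<gamma> \<zeta> k"
   "\<And>\<zeta> i. 1 \<le> i \<Longrightarrow> i \<le> n \<Longrightarrow> \<Psi> \<zeta> (i, n - i + 1) = \<zeta> (i, n - i + 1)"
    using Psi_exists by blast
  define m where "m = Mp n C \<gamma> \<zeta>"
  define Zh where "Zh = (\<Sum>i=1..n. Zhat n C \<gamma> f \<sigma> \<zeta> i)"
  define Qf where "Qf \<eta> \<longleftrightarrow> (\<Sum>x\<in>Jset. acoef (bf m (Mc \<eta>)) x * \<eta> x) \<le> x - Zh" for \<eta>
  have step1: "(Zadj n C \<gamma> f \<sigma> \<zeta> \<zeta>' \<le> x) \<longleftrightarrow> Qf (\<Psi> \<zeta>')" for \<zeta>'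
  proof -
    have "(\<Sum>x\<in>Jset. acoef (bf m (Mc (\<Psi> \<zeta>'))) x * \<Psi> \<zeta>' x)
      = (\<Sum>i=2..n. asimE (Mp n C \<gamma> \<zeta>) (Mp n C \<gamma> \<zeta>') * \<sigma> (n - i + 1)
          * sqrt (Mp n C \<gamma> \<zeta> (n - i + 1) / Mp n C \<gamma> \<zeta>' (n - i + 1))
          * (pp i * \<zeta>' (i, n - i + 1) - qq i * Aq \<zeta>' (n - i + 1)))"
      unfolding sumJ
    proof (rule sum.cong)
      fix i assume i: "i \<in> {2..n}"
      then have i': "2 \<le> i" "i \<le> n" by auto
      have i1: "1 \<le> i" using i' by simp
      have a: "asimE m (Mc (\<Psi> \<zeta>')) = asimE m (Mp n C \<gamma> \<zeta>')"
        by (rule asimE_cong) (simp add: P(3))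
      show "bf m (Mc (\<Psi> \<zeta>')) i * (pp i * \<Psi> \<zeta>' (i, n - i + 1) - qq i * \<Psi> \<zeta>' (0, n - i + 1))
        = asimE (Mp n C \<gamma> \<zeta>) (Mp n C \<gamma> \<zeta>') * \<sigma> (n - i + 1)
          * sqrt (Mp n C \<gamma> \<zeta> (n - i + 1) / Mp n C \<gamma> \<zeta>' (n - i + 1))
          * (pp i * \<zeta>' (i, n - i + 1) - qq i * Aq \<zeta>' (n - i + 1))"
        unfolding bf_def a P(3)[OF kk1[OF i'] kk2[OF i']] P(2)[OF kk1[OF i'] kk2[OF i']]
          P(4)[OF i1 i'(2)] using i' by (simp add: m_def)
    qed simp
    then show ?thesis unfolding Qf_def Zadj_eq Zh_def by linarith
  qed
  have Qm: "{\<eta>\<in>space (PN (idx n)). Qf \<eta>} \<in> sets (PN (idx n))"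
    unfolding Qf_def by measurable
  have "measure (PN (idx n)) {\<zeta>'\<in>space (PN (idx n)). Zadj n C \<gamma> f \<sigma> \<zeta> \<zeta>' \<le> x}
      = measure (PN (idx n)) {\<zeta>'\<in>space (PN (idx n)). Qf (\<Psi> \<zeta>')}"
    by (simp add: step1)
  also have "\<dots> = measure (PN (idx n)) {\<eta>\<in>space (PN (idx n)). Qf \<eta>}"
    by (rule mpres_measure[OF P(1) Qm])
  also have "\<dots> = (\<integral>r. Phi ((x - Zh) / sqrt (\<Sum>j\<in>Jset. (acoef (bf m (Mc r)) j)\<^sup>2)) \<partial>PN Rset)"
    unfolding Qf_def
  proof (rule master[OF fin_idx idx_split(2) idx_split(1) J_sub])
    show "(\<lambda>\<eta>. x - Zh) \<in> borel_measurable (PN (idx n))" "(\<lambda>\<eta>. x - Zh) \<in> borel_measurable (PN Rset)" by simp_all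
    show "\<And>j. (\<lambda>\<eta>. acoef (bf m (Mc \<eta>)) j) \<in> borel_measurable (PN (idx n))" by measurable
    show "\<And>j. (\<lambda>\<eta>. acoef (bf m (Mc \<eta>)) j) \<in> borel_measurable (PN Rset)" by measurable
    show "\<And>\<eta> \<eta>'. \<forall>i\<in>Rset. \<eta> i = \<eta>' i \<Longrightarrow> acoef (bf m (Mc \<eta>)) = acoef (bf m (Mc \<eta>')) \<and> x - Zh = x - Zh"
    proof -
      fix \<eta> \<eta>' :: "nat \<times> nat \<Rightarrow> real" assume "\<forall>i\<in>Rset. \<eta> i = \<eta>' i"
      then have "Mc \<eta> = Mc \<eta>'" by (rule Mc_dep)
      then show "acoef (bf m (Mc \<eta>)) = acoef (bf m (Mc \<eta>')) \<and> x - Zh = x - Zh" by simp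
    qed
    show "AE r in PN Rset. acoef (bf m (Mc r)) (2, n - 1) \<noteq> 0"
      using AE_good[OF fin_R order_refl]
    proof eventually_elim
      fix r assume gr: "goodm (Mc r)"
      have k: "1 \<le> n - 1" "n - 1 \<le> n - 1" using n2 by auto
      have e: "n - 2 + 1 = n - 1" using n2 by auto
      have "asimE m (Mc r) > 0"
        by (rule asimE_pos) (use g gr in \<open>auto simp: m_def goodm_def\<close>)
      moreover have "\<sigma> (n - 1) > 0" using spos[OF k] .
      moreover have "m (n - 1) > 0" "Mc r (n - 1) > 0" using g gr k by (auto simp: m_def goodm_def)
      moreover have "pp 2 > 0" using pp_pos n2 by simp
      ultimately show "acoef (bf m (Mc r)) (2, n - 1) \<noteq> 0"
        unfolding acoef_def bf_def using e by simp
    qed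
  qed
  also have "\<dots> = (\<integral>r. Phi ((x - Zh) / sqrt (TT m * S1) * sqrt (TT (Mc r))) \<partial>PN Rset)"
  proof (rule integral_cong_AE)
    show "AE r in PN Rset. Phi ((x - Zh) / sqrt (\<Sum>j\<in>Jset. (acoef (bf m (Mc r)) j)\<^sup>2))
        = Phi ((x - Zh) / sqrt (TT m * S1) * sqrt (TT (Mc r)))"
      using AE_good[OF fin_R order_refl]
    proof eventually_elim
      fix r assume gr: "goodm (Mc r)"
      have gm: "\<And>k. 1 \<le> k \<Longrightarrow> k \<le> n - 1 \<Longrightarrow> m k > 0" using g by (auto simp: m_def goodm_def)
      have gr': "\<And>k. 1 \<le> k \<Longrightarrow> k \<le> n - 1 \<Longrightarrow> Mc r k > 0" using gr by (auto simp: goodm_def)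
      have "(\<Sum>j\<in>Jset. (acoef (bf m (Mc r)) j)\<^sup>2) = TT m * S1 / TT (Mc r)"
        unfolding sumJ2 bf_def by (rule norm_eq[OF gm gr'])
      moreover have "TT m > 0" "TT (Mc r) > 0" using TT_pos gm gr' by auto
      ultimately show "Phi ((x - Zh) / sqrt (\<Sum>j\<in>Jset. (acoef (bf m (Mc r)) j)\<^sup>2))
        = Phi ((x - Zh) / sqrt (TT m * S1) * sqrt (TT (Mc r)))"
        using S1_pos by (simp add: real_sqrt_divide)
    qed
  qed measurable
  also have "\<dots> = H ((x - Zh) / sqrt (TT m * S1))" unfolding H_def ..
  finally show ?thesis by (simp add: m_def Zh_def)
qed

end

context cl begin

lemma SCR_eq:
  assumes a: "0 < \<alpha>" "\<alpha> < 1" and g: "goodm (Mp n C \<gamma> \<zeta>)"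
  shows "SCR n C \<gamma> f \<sigma> \<alpha> \<zeta> = (\<Sum>i=1..n. Zhat n C \<gamma> f \<sigma> \<zeta> i) + qa \<alpha> * sqrt (TT (Mp n C \<gamma> \<zeta>) * S1)"
proof -
  define Zh where "Zh = (\<Sum>i=1..n. Zhat n C \<gamma> f \<sigma> \<zeta> i)"
  define c where "c = sqrt (TT (Mp n C \<gamma> \<zeta>) * S1)"
  have cp: "c > 0" unfolding c_def using TT_pos[of "Mp n C \<gamma> \<zeta>"] g S1_pos by (auto simp: goodm_def)
  have q: "{z. \<alpha> \<le> H z} = {qa \<alpha>..}" using qa_facts[OF a] by blast
  have "{x. \<alpha> \<le> measure (resid_space n) {\<zeta>'\<in>space (resid_space n). Zadj n C \<gamma> f \<sigma> \<zeta> \<zeta>' \<le> x}}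
      = {x. \<alpha> \<le> H ((x - Zh) / c)}"
    unfolding resid_space_def using F_eq[OF g] by (simp add: Zh_def c_def)
  also have "\<dots> = {Zh + qa \<alpha> * c..}"
  proof -
    have "\<alpha> \<le> H ((x - Zh) / c) \<longleftrightarrow> Zh + qa \<alpha> * c \<le> x" for x
    proof -
      have "\<alpha> \<le> H ((x - Zh) / c) \<longleftrightarrow> qa \<alpha> \<le> (x - Zh) / c" using q by blast
      also have "\<dots> \<longleftrightarrow> Zh + qa \<alpha> * c \<le> x" using cp by (simp add: pos_le_divide_eq algebra_simps)
      finally show ?thesis .
    qed
    then show ?thesis by auto
  qed
  finally show ?thesis unfolding SCR_def quantile_def by (simp add: Zh_def c_def)
qed

lemma SCR_meas:
  assumes a: "0 < \<alpha>" "\<alpha> < 1"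
  shows "SCR n C \<gamma> f \<sigma> \<alpha> \<in> borel_measurable (PN (idx n))"
proof (rule borel_measurableI_le)
  fix t
  define Q where "Q = {p\<in>space (PN (idx n) \<Otimes>\<^sub>M PN (idx n)). Zadj n C \<gamma> f \<sigma> (fst p) (snd p) \<le> t}"
  have Qs: "Q \<in> sets (PN (idx n) \<Otimes>\<^sub>M PN (idx n))"
    unfolding Q_def using Zadj_meas2 by measurable
  have sf: "sigma_finite_measure (PN (idx n))"
    using prob_PN prob_space_imp_sigma_finite by blast
  have em: "(\<lambda>\<zeta>. emeasure (PN (idx n)) (Pair \<zeta> -` Q)) \<in> borel_measurable (PN (idx n))"
    by (rule sigma_finite_measure.measurable_emeasure_Pair[OF sf Qs])
  have pre: "Pair \<zeta> -` Q = {\<zeta>'\<in>space (PN (idx n)). Zadj n C \<gamma> f \<sigma> \<zeta> \<zeta>' \<le> t}" if "\<zeta> \<in> space (PN (idx n))" for \<zeta>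
    using that unfolding Q_def by (auto simp: space_pair_measure)
  have mm: "(\<lambda>\<zeta>. measure (PN (idx n)) {\<zeta>'\<in>space (PN (idx n)). Zadj n C \<gamma> f \<sigma> \<zeta> \<zeta>' \<le> t}) \<in> borel_measurable (PN (idx n))"
  proof -
    have "(\<lambda>\<zeta>. enn2real (emeasure (PN (idx n)) (Pair \<zeta> -` Q))) \<in> borel_measurable (PN (idx n))"
      using em by measurable
    then show ?thesis
      by (rule measurable_cong[THEN iffD1, rotated]) (simp add: pre measure_def)
  qed
  have e: "{\<zeta>\<in>space (PN (idx n)). SCR n C \<gamma> f \<sigma> \<alpha> \<zeta> \<le> t}
      = {\<zeta>\<in>space (PN (idx n)). \<alpha> \<le> measure (PN (idx n)) {\<zeta>'\<in>space (PN (idx n)). Zadj n C \<gamma> f \<sigma> \<zeta> \<zeta>' \<le> t}}"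
    unfolding SCR_def resid_space_def
    using quantile_le[OF prob_PN Zadj_meas1 a] by simp
  show "{\<zeta>\<in>space (PN (idx n)). SCR n C \<gamma> f \<sigma> \<alpha> \<zeta> \<le> t} \<in> sets (PN (idx n))"
    unfolding e using mm by measurable
qed

lemma main:
  assumes a: "0 < \<alpha>" "\<alpha> < 1"
  shows "measure (PN (idx n)) {\<zeta>\<in>space (PN (idx n)).
           (\<Sum>i=1..n. Ztrue n C \<gamma> f \<sigma> \<zeta> i) \<le> SCR n C \<gamma> f \<sigma> \<alpha> \<zeta>} = \<alpha>"
proof -
  obtain \<Psi> where P: "mpres (idx n) \<Psi>"
   "\<And>\<zeta> k. 1 \<le> k \<Longrightarrow> k \<le> n - 1 \<Longrightarrow> \<Psi> \<zeta> (0, k) = Aq \<zeta> k"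
   "\<And>\<zeta> k. 1 \<le> k \<Longrightarrow> k \<le> n - 1 \<Longrightarrow> Mc (\<Psi> \<zeta>) k = Mp n C \<gamma> \<zeta> k"
   "\<And>\<zeta> i. 1 \<le> i \<Longrightarrow> i \<le> n \<Longrightarrow> \<Psi> \<zeta> (i, n - i + 1) = \<zeta> (i, n - i + 1)"
    using Psi_exists by blast
  define sg where "sg i = \<sigma> (n - i + 1)" for i
  define Qfin where "Qfin \<eta> \<longleftrightarrow> (\<Sum>x\<in>Jset. acoef sg x * \<eta> x) \<le> qa \<alpha> * sqrt (TT (Mc \<eta>) * S1)" for \<eta>
  note SCRm[measurable] = SCR_meas[OF a]
  note Ztm[measurable] = Ztrue_meas
  have S1s: "{\<zeta>\<in>space (PN (idx n)). (\<Sum>i=1..n. Ztrue n C \<gamma> f \<sigma> \<zeta> i) \<le> SCR n C \<gamma> f \<sigma> \<alpha> \<zeta>} \<in> sets (PN (idx n))"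
    by measurable
  have acm[measurable]: "(\<lambda>\<eta>. acoef sg j) \<in> borel_measurable (PN S)" for j S by simp
  have Qm: "{\<eta>\<in>space (PN (idx n)). Qfin \<eta>} \<in> sets (PN (idx n))"
    unfolding Qfin_def by measurable
  have S2s: "{\<zeta>\<in>space (PN (idx n)). Qfin (\<Psi> \<zeta>)} \<in> sets (PN (idx n))"
    by (rule mpres_sets[OF P(1) Qm])
  have aeg: "AE \<zeta> in PN (idx n). goodm (Mc (\<Psi> \<zeta>))"
    by (rule mpres_AE[OF P(1) goodm_sets AE_good[OF fin_idx]]) (use idx_split in auto)
  have ae: "AE \<zeta> in PN (idx n). \<zeta> \<in> {\<zeta>\<in>space (PN (idx n)). (\<Sum>i=1..n. Ztrue n C \<gamma> f \<sigma> \<zeta> i) \<le> SCR n C \<gamma> f \<sigma> \<alpha> \<zeta>}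
       \<longleftrightarrow> \<zeta> \<in> {\<zeta>\<in>space (PN (idx n)). Qfin (\<Psi> \<zeta>)}"
    using aeg
  proof eventually_elim
    fix \<zeta> assume gP: "goodm (Mc (\<Psi> \<zeta>))"
    have g: "goodm (Mp n C \<gamma> \<zeta>)" using gP P(3) by (auto simp: goodm_def)
    have T: "TT (Mp n C \<gamma> \<zeta>) = TT (Mc (\<Psi> \<zeta>))" by (rule TT_cong) (simp add: P(3))
    have Z: "(\<Sum>i=1..n. Ztrue n C \<gamma> f \<sigma> \<zeta> i) = (\<Sum>i=1..n. Zhat n C \<gamma> f \<sigma> \<zeta> i) + (\<Sum>x\<in>Jset. acoef sg x * \<Psi> \<zeta> x)"
      unfolding Ztrue_sum sumJ
    proof (rule arg_cong[where f="\<lambda>u. _ + u"], rule sum.cong)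
      fix i assume i: "i \<in> {2..n}"
      then have i': "2 \<le> i" "i \<le> n" "1 \<le> i" by auto
      show "\<sigma> (n - i + 1) * (pp i * \<zeta> (i, n - i + 1) - qq i * Aq \<zeta> (n - i + 1))
         = sg i * (pp i * \<Psi> \<zeta> (i, n - i + 1) - qq i * \<Psi> \<zeta> (0, n - i + 1))"
        unfolding sg_def P(4)[OF i'(3) i'(2)] P(2)[OF kk1[OF i'(1,2)] kk2[OF i'(1,2)]] ..
    qed simp
    show "\<zeta> \<in> {\<zeta>\<in>space (PN (idx n)). (\<Sum>i=1..n. Ztrue n C \<gamma> f \<sigma> \<zeta> i) \<le> SCR n C \<gamma> f \<sigma> \<alpha> \<zeta>}
       \<longleftrightarrow> \<zeta> \<in> {\<zeta>\<in>space (PN (idx n)). Qfin (\<Psi> \<zeta>)}"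
      using Z SCR_eq[OF a g] T by (simp add: Qfin_def)
  qed
  have "measure (PN (idx n)) {\<zeta>\<in>space (PN (idx n)). (\<Sum>i=1..n. Ztrue n C \<gamma> f \<sigma> \<zeta> i) \<le> SCR n C \<gamma> f \<sigma> \<alpha> \<zeta>}
     = measure (PN (idx n)) {\<zeta>\<in>space (PN (idx n)). Qfin (\<Psi> \<zeta>)}"
    by (rule measure_eq_AE[OF ae S1s S2s])
  also have "\<dots> = measure (PN (idx n)) {\<eta>\<in>space (PN (idx n)). Qfin \<eta>}"
    by (rule mpres_measure[OF P(1) Qm])
  also have "\<dots> = (\<integral>r. Phi (qa \<alpha> * sqrt (TT (Mc r) * S1) / sqrt (\<Sum>j\<in>Jset. (acoef sg j)\<^sup>2)) \<partial>PN Rset)"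
    unfolding Qfin_def
  proof (rule master[OF fin_idx idx_split(2) idx_split(1) J_sub])
    show "(\<lambda>\<eta>. qa \<alpha> * sqrt (TT (Mc \<eta>) * S1)) \<in> borel_measurable (PN (idx n))" by measurable
    show "(\<lambda>\<eta>. qa \<alpha> * sqrt (TT (Mc \<eta>) * S1)) \<in> borel_measurable (PN Rset)" by measurable
    show "\<And>j. (\<lambda>\<eta>. acoef sg j) \<in> borel_measurable (PN (idx n))" by simp
    show "\<And>j. (\<lambda>\<eta>. acoef sg j) \<in> borel_measurable (PN Rset)" by simp
    show "\<And>\<eta> \<eta>'. \<forall>i\<in>Rset. \<eta> i = \<eta>' i \<Longrightarrow> acoef sg = acoef sg \<and>
        qa \<alpha> * sqrt (TT (Mc \<eta>) * S1) = qa \<alpha> * sqrt (TT (Mc \<eta>') * S1)"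
    proof -
      fix \<eta> \<eta>' :: "nat \<times> nat \<Rightarrow> real" assume "\<forall>i\<in>Rset. \<eta> i = \<eta>' i"
      then have "Mc \<eta> = Mc \<eta>'" by (rule Mc_dep)
      then show "acoef sg = acoef sg \<and> qa \<alpha> * sqrt (TT (Mc \<eta>) * S1) = qa \<alpha> * sqrt (TT (Mc \<eta>') * S1)" by simp
    qed
    show "AE r in PN Rset. acoef sg (2, n - 1) \<noteq> 0"
    proof (rule AE_I2)
      fix r
      have k: "1 \<le> n - 1" "n - 1 \<le> n - 1" using n2 by auto
      have e: "n - 2 + 1 = n - 1" using n2 by auto
      have "\<sigma> (n - 1) > 0" using spos[OF k] .
      moreover have "pp 2 > 0" using pp_pos n2 by simp
      ultimately show "acoef sg (2, n - 1) \<noteq> 0" unfolding acoef_def sg_def using e by simp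
    qed
  qed
  also have "\<dots> = H (qa \<alpha>)"
  proof -
    have s: "(\<Sum>j\<in>Jset. (acoef sg j)\<^sup>2) = S1"
      unfolding sumJ2 sg_def TT_def by (rule sum.cong) (simp_all add: algebra_simps)
    show ?thesis unfolding s H_def using S1_pos
      by (simp add: real_sqrt_mult)
  qed
  also have "\<dots> = \<alpha>" using qa_facts[OF a] by blast
  finally show ?thesis .
qed

end

theorem theorem4p3:
  fixes n :: nat and \<gamma> \<alpha> :: real and C :: "nat \<Rightarrow> nat \<Rightarrow> real" and f \<sigma> :: "nat \<Rightarrow> real"
  assumes "n \<ge> 2" and "\<gamma> \<in> {0, 1}" and "0 < \<alpha>" and "\<alpha> < 1"
    and "\<And>i k. i + k \<le> n \<Longrightarrow> C i k > 0"
    and "\<And>k. 1 \<le> k \<Longrightarrow> k \<le> n - 1 \<Longrightarrow> f k > 0"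
    and "\<And>k. 1 \<le> k \<Longrightarrow> k \<le> n - 1 \<Longrightarrow> \<sigma> k > 0"
    and "f n = 1" and "\<sigma> n = 0"
  shows "measure (resid_space n)
           {\<zeta> \<in> space (resid_space n).
              (\<Sum>i=1..n. Ztrue n C \<gamma> f \<sigma> \<zeta> i) \<le> SCR n C \<gamma> f \<sigma> \<alpha> \<zeta>} = \<alpha>"
proof -
  interpret cl n C \<gamma> f \<sigma>
    by (rule cl.intro) (use assms in auto)
  show ?thesis unfolding resid_space_def using main[OF assms(3,4)] by simp
qed


end
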